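(* Consider the system on an Erdős random graph process on $N\ge2$ nodes with noise level $\eta>0$. (i) If $0<\eta\le1$, then for every initial condition, with probability one the state eventually reaches and remains at either the all-$(+1)$ state or the all-$(-1)$ state (agreement). (ii) If $\eta>1$, then $\mathbf{E}\,S(k)=\eta^{-k}\,\mathbf{E}\,S(0)$ for all $k\ge0$; in particular $\mathbf{E}\,S(k)$ converges to zero exponentially with decay exponent $\ln\eta$.
   Context: Erdős random graph process: at each time $k$, the graph $G(k)$ on nodes $V=\{1,\dots,N\}$ is a simple undirected graph in which each of the $N(N-1)/2$ possible edges is present independently with probability $1/2$ (so each of the $2^{N(N-1)/2}$ graphs has equal probability); the graphs at different times are independent, and independent of the noises and of $x(0)$. Each node carries a value $x_i(k)\in\{+1,-1\}$. The neighborhood $N_i(k)$ consists of $i$ and all nodes adjacent to $i$ in $G(k)$; $v_i(k)=\frac{1}{|N_i(k)|}\sum_{j\in N_i(k)}x_j(k)$. The update is $x_i(k+1)=\operatorname{sign}[v_i(k)+\xi_i(k)]$, where $\xi_i(k)$ are i.i.d. uniform on $[-\eta,\eta]$ across $i$ and $k$, independent of $x(0)$ and of the graph process. The state sum is $S(k)=\sum_{i=1}^N x_i(k)$. *)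

theory Defs
  imports "HOL-Probability.Probability"
begin

definition nbhd :: "nat \<Rightarrow> (nat \<Rightarrow> nat \<Rightarrow> bool) \<Rightarrow> nat \<Rightarrow> nat set" where
  "nbhd N g i = {j \<in> {1..N}. j = i \<or> g i j}"

definition local_avg :: "nat \<Rightarrow> (nat \<Rightarrow> nat \<Rightarrow> bool) \<Rightarrow> (nat \<Rightarrow> real) \<Rightarrow> nat \<Rightarrow> real" where
  "local_avg N g x i = (\<Sum>j\<in>nbhd N g i. x j) / real (card (nbhd N g i))"

text \<open>Trajectory: a k i j = adjacency of i,j in G(k); xi i k = noise of node i at time k;
  x0 = initial state.  x_i(k+1) = sign(v_i(k) + xi_i(k)).\<close>

fun traj :: "nat \<Rightarrow> (nat \<Rightarrow> nat \<Rightarrow> nat \<Rightarrow> bool) \<Rightarrow> (nat \<Rightarrow> nat \<Rightarrow> real) \<Rightarrow> (nat \<Rightarrow> real)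
             \<Rightarrow> nat \<Rightarrow> nat \<Rightarrow> real" where
  "traj N a xi x0 0 = x0"
| "traj N a xi x0 (Suc k) = (\<lambda>i. sgn (local_avg N (a k) (traj N a xi x0 k) i + xi i k))"

text \<open>The basic random inputs: edge indicators (time k, pair i<l) and noises (node i, time k).\<close>

definition basic_index :: "nat \<Rightarrow> ((nat \<times> nat \<times> nat) + (nat \<times> nat)) set" where
  "basic_index N = Inl ` {(k, i, l). 1 \<le> i \<and> i < l \<and> l \<le> N} \<union> Inr ` {(i, k). 1 \<le> i \<and> i \<le> N}"

definition basic_family ::
  "(nat \<Rightarrow> nat \<Rightarrow> nat \<Rightarrow> 'a \<Rightarrow> bool) \<Rightarrow> (nat \<Rightarrow> nat \<Rightarrow> 'a \<Rightarrow> real)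
    \<Rightarrow> (nat \<times> nat \<times> nat) + (nat \<times> nat) \<Rightarrow> 'a \<Rightarrow> real" where
  "basic_family adj xi j = (case j of
      Inl (k, i, l) \<Rightarrow> (\<lambda>\<omega>. of_bool (adj k i l \<omega>))
    | Inr (i, k) \<Rightarrow> xi i k)"

text \<open>Independence of two random variables with possibly different value types
  (the library's indep_var requires a common value type); this is the same definition
  as indep_var, via generated sigma-algebras.\<close>

definition indep_rv :: "'a measure \<Rightarrow> 'b measure \<Rightarrow> ('a \<Rightarrow> 'b) \<Rightarrow> 'c measure \<Rightarrow> ('a \<Rightarrow> 'c) \<Rightarrow> bool" where
  "indep_rv M Ma A Mb B \<longleftrightarrow>
     A \<in> measurable M Ma \<and> B \<in> measurable M Mb \<and>
     prob_space.indep_set M {A -` X \<inter> space M | X. X \<in> sets Ma} {B -` Y \<inter> space M | Y. Y \<in> sets Mb}"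

definition state :: "nat \<Rightarrow> (nat \<Rightarrow> nat \<Rightarrow> nat \<Rightarrow> 'a \<Rightarrow> bool) \<Rightarrow> (nat \<Rightarrow> nat \<Rightarrow> 'a \<Rightarrow> real)
    \<Rightarrow> ('a \<Rightarrow> nat \<Rightarrow> real) \<Rightarrow> nat \<Rightarrow> 'a \<Rightarrow> nat \<Rightarrow> real" where
  "state N adj xi x0 k \<omega> = traj N (\<lambda>k i j. adj k i j \<omega>) (\<lambda>i k. xi i k \<omega>) (x0 \<omega>) k"

definition state_sum :: "nat \<Rightarrow> (nat \<Rightarrow> nat \<Rightarrow> nat \<Rightarrow> 'a \<Rightarrow> bool) \<Rightarrow> (nat \<Rightarrow> nat \<Rightarrow> 'a \<Rightarrow> real)
    \<Rightarrow> ('a \<Rightarrow> nat \<Rightarrow> real) \<Rightarrow> nat \<Rightarrow> 'a \<Rightarrow> real" where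
  "state_sum N adj xi x0 k \<omega> = (\<Sum>i\<in>{1..N}. state N adj xi x0 k \<omega> i)"

end

theory Submission
  imports Defs
begin

declare of_bool_or_iff[simp del]

locale sysA = prob_space M for M :: "'a measure" +
  fixes N :: nat and \<eta> :: real and adj :: "nat \<Rightarrow> nat \<Rightarrow> nat \<Rightarrow> 'a \<Rightarrow> bool"
    and \<xi> :: "nat \<Rightarrow> nat \<Rightarrow> 'a \<Rightarrow> real" and x0 :: "'a \<Rightarrow> nat \<Rightarrow> real"
  assumes N2: "N \<ge> 2" and eta_pos: "\<eta> > 0"
    and adj_sym: "\<forall>k i j. \<forall>\<omega>\<in>space M. adj k i j \<omega> = adj k j i \<omega>"
    and edges: "\<forall>k i j. 1 \<le> i \<longrightarrow> i < j \<longrightarrow> j \<le> N \<longrightarrow>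
                  prob {\<omega> \<in> space M. adj k i j \<omega>} = 1 / 2"
    and noise: "\<forall>i k. 1 \<le> i \<longrightarrow> i \<le> N \<longrightarrow>
                  distr M lborel (\<xi> i k) = uniform_measure lborel {-\<eta>..\<eta>}"
    and indep: "indep_vars (\<lambda>_. borel) (basic_family adj \<xi>) (basic_index N)"
    and x0_vals: "\<forall>\<omega>\<in>space M. \<forall>i\<in>{1..N}. x0 \<omega> i \<in> {1, -1}"
    and x0_indep: "indep_rv M
                  (Pi\<^sub>M {1..N} (\<lambda>_. borel)) (\<lambda>\<omega>. restrict (x0 \<omega>) {1..N})
                  (Pi\<^sub>M (basic_index N) (\<lambda>_. borel))
                  (\<lambda>\<omega>. \<lambda>j\<in>basic_index N. basic_family adj \<xi> j \<omega>)"
begin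

abbreviation "I \<equiv> basic_index N"
abbreviation "x0r \<equiv> (\<lambda>\<omega>. restrict (x0 \<omega>) {1..N})"
abbreviation "famR S \<equiv> (\<lambda>\<omega>. restrict (\<lambda>j. basic_family adj \<xi> j \<omega>) S)"
abbreviation "X0M \<equiv> (Pi\<^sub>M {1..N} (\<lambda>_. borel) :: (nat \<Rightarrow> real) measure)"
abbreviation "PB S \<equiv> (Pi\<^sub>M S (\<lambda>_. borel) :: (_ \<Rightarrow> real) measure)"

definition Gp where
  "Gp S = {x0r -` A \<inter> famR S -` B \<inter> space M | A B. A \<in> sets X0M \<and> B \<in> sets (PB S)}"
definition Gt where
  "Gt T = {famR T -` C \<inter> space M | C. C \<in> sets (PB T)}"

lemma fam_meas: "j \<in> I \<Longrightarrow> basic_family adj \<xi> j \<in> borel_measurable M"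
  using indep unfolding indep_vars_def by auto

lemma famR_meas: "S \<subseteq> I \<Longrightarrow> famR S \<in> measurable M (PB S)"
  by (intro measurable_restrict) (auto intro: fam_meas)

lemma x0r_meas: "x0r \<in> measurable M X0M"
  using x0_indep unfolding indep_rv_def by auto

lemma x0_indep': "indep_set {x0r -` X \<inter> space M | X. X \<in> sets X0M}
   {(\<lambda>\<omega>. \<lambda>j\<in>I. basic_family adj \<xi> j \<omega>) -` Y \<inter> space M | Y. Y \<in> sets (PB I)}"
  using x0_indep unfolding indep_rv_def by auto

lemma indep_fam2:
  assumes "S \<subseteq> I" "T \<subseteq> I" "S \<inter> T = {}" "B \<in> sets (PB S)" "C \<in> sets (PB T)"
  shows "prob (famR S -` B \<inter> space M \<inter> (famR T -` C \<inter> space M)) =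
     prob (famR S -` B \<inter> space M) * prob (famR T -` C \<inter> space M)"
proof -
  have "indep_var (PB S) (famR S) (PB T) (famR T)"
    using indep_var_restrict[OF indep assms(3,1,2)] .
  then have "indep_set (sigma_sets (space M) {famR S -` A \<inter> space M | A. A \<in> sets (PB S)})
      (sigma_sets (space M) {famR T -` A \<inter> space M | A. A \<in> sets (PB T)})"
    unfolding indep_var_eq by auto
  then show ?thesis
    by (rule indep_setD) (use assms in auto)
qed

lemma restrict_sub: "S \<subseteq> I \<Longrightarrow> restrict (restrict f I) S = restrict f S"
  by (auto simp: restrict_def fun_eq_iff)

lemma x0_indep_set:
  assumes "S \<subseteq> I" "A \<in> sets X0M" "E \<in> sets (PB I)"
  shows "prob (x0r -` A \<inter> space M \<inter> ((\<lambda>\<omega>. \<lambda>j\<in>I. basic_family adj \<xi> j \<omega>) -` E \<inter> space M))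
     = prob (x0r -` A \<inter> space M) * prob ((\<lambda>\<omega>. \<lambda>j\<in>I. basic_family adj \<xi> j \<omega>) -` E \<inter> space M)"
  by (rule indep_setD[OF x0_indep']) (use assms in auto)

lemma indep_Gp_Gt:
  assumes ST: "S \<subseteq> I" "T \<subseteq> I" "S \<inter> T = {}"
  shows "indep_set (sigma_sets (space M) (Gp S)) (sigma_sets (space M) (Gt T))"
proof (rule indep_set_sigma_sets)
  define famI where "famI = (\<lambda>\<omega>. \<lambda>j\<in>I. basic_family adj \<xi> j \<omega>)"
  have famI_meas: "famI \<in> measurable M (PB I)"
    unfolding famI_def using famR_meas[of I] by simp
  have rS: "(\<lambda>f. restrict f S) \<in> measurable (PB I) (PB S)"
    using ST by (intro measurable_restrict_subset) auto
  have rT: "(\<lambda>f. restrict f T) \<in> measurable (PB I) (PB T)"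
    using ST by (intro measurable_restrict_subset) auto
  show "indep_set (Gp S) (Gt T)"
  proof (rule indep_setI)
    show "Gp S \<subseteq> events"
    proof
      fix a assume "a \<in> Gp S"
      then obtain A B where "A \<in> sets X0M" "B \<in> sets (PB S)" and a: "a = x0r -` A \<inter> famR S -` B \<inter> space M"
        unfolding Gp_def by blast
      then have "(x0r -` A \<inter> space M) \<inter> (famR S -` B \<inter> space M) \<in> events"
        using x0r_meas famR_meas[OF ST(1)] by (intro sets.Int measurable_sets) auto
      moreover have "x0r -` A \<inter> famR S -` B \<inter> space M = (x0r -` A \<inter> space M) \<inter> (famR S -` B \<inter> space M)"
        by auto
      ultimately show "a \<in> events" using a by simp
    qed
    show "Gt T \<subseteq> events"
      using famR_meas[OF ST(2)] unfolding Gt_def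
      by (auto intro!: measurable_sets)
    fix a b assume a: "a \<in> Gp S" and b: "b \<in> Gt T"
    then obtain A B C where A: "A \<in> sets X0M" and B: "B \<in> sets (PB S)" and C: "C \<in> sets (PB T)"
      and a_eq: "a = x0r -` A \<inter> famR S -` B \<inter> space M" and b_eq: "b = famR T -` C \<inter> space M"
      unfolding Gp_def Gt_def by blast
    define D where "D = (\<lambda>f. restrict f S) -` B \<inter> space (PB I) \<inter> ((\<lambda>f. restrict f T) -` C \<inter> space (PB I))"
    define D' where "D' = (\<lambda>f. restrict f S) -` B \<inter> space (PB I)"
    have D: "D \<in> sets (PB I)" unfolding D_def
      using measurable_sets[OF rS B] measurable_sets[OF rT C] by auto
    have D': "D' \<in> sets (PB I)" unfolding D'_def
      using measurable_sets[OF rS B] by auto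
    have famIsp: "\<omega> \<in> space M \<Longrightarrow> famI \<omega> \<in> space (PB I)" for \<omega>
      using famI_meas by (rule measurable_space)
    have e1: "famI -` D \<inter> space M = famR S -` B \<inter> space M \<inter> (famR T -` C \<inter> space M)"
      using famIsp ST unfolding D_def famI_def by (auto simp: Int_absorb1[OF ST(1)] Int_absorb1[OF ST(2)])
    have e2: "famI -` D' \<inter> space M = famR S -` B \<inter> space M"
      using famIsp ST unfolding D'_def famI_def by (auto simp: Int_absorb1[OF ST(1)] Int_absorb1[OF ST(2)])
    have "a \<inter> b = x0r -` A \<inter> space M \<inter> (famI -` D \<inter> space M)"
      unfolding a_eq b_eq e1 by auto
    then have "prob (a \<inter> b) = prob (x0r -` A \<inter> space M) * prob (famI -` D \<inter> space M)"
      using x0_indep_set[OF ST(1) A D] unfolding famI_def by simp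
    also have "\<dots> = prob (x0r -` A \<inter> space M) * (prob (famR S -` B \<inter> space M) * prob (famR T -` C \<inter> space M))"
      unfolding e1 using indep_fam2[OF ST B C] by simp
    finally have 1: "prob (a \<inter> b) = prob (x0r -` A \<inter> space M) * (prob (famR S -` B \<inter> space M) * prob (famR T -` C \<inter> space M))" .
    have "a = x0r -` A \<inter> space M \<inter> (famI -` D' \<inter> space M)"
      unfolding a_eq e2 by auto
    then have 2: "prob a = prob (x0r -` A \<inter> space M) * prob (famR S -` B \<inter> space M)"
      using x0_indep_set[OF ST(1) A D'] e2 unfolding famI_def by simp
    show "prob (a \<inter> b) = prob a * prob b"
      using 1 2 by (simp add: b_eq mult.assoc)
  qed
  show "Int_stable (Gp S)"
    unfolding Int_stable_def Gp_def
  proof (safe)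
    fix A B A' B' assume "A \<in> sets X0M" "B \<in> sets (PB S)" "A' \<in> sets X0M" "B' \<in> sets (PB S)"
    then show "\<exists>A'' B''. x0r -` A \<inter> famR S -` B \<inter> space M \<inter> (x0r -` A' \<inter> famR S -` B' \<inter> space M) =
        x0r -` A'' \<inter> famR S -` B'' \<inter> space M \<and> A'' \<in> sets X0M \<and> B'' \<in> sets (PB S)"
      by (intro exI[of _ "A \<inter> A'"] exI[of _ "B \<inter> B'"]) auto
  qed
  show "Int_stable (Gt T)"
    unfolding Int_stable_def Gt_def
  proof (safe)
    fix C C' assume "C \<in> sets (PB T)" "C' \<in> sets (PB T)"
    then show "\<exists>C''. famR T -` C \<inter> space M \<inter> (famR T -` C' \<inter> space M) =
        famR T -` C'' \<inter> space M \<and> C'' \<in> sets (PB T)"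
      by (intro exI[of _ "C \<inter> C'"]) auto
  qed
qed

definition "Mp S = sigma (space M) (Gp S)"
definition "Mt T = sigma (space M) (Gt T)"

lemma Gp_sub: "Gp S \<subseteq> Pow (space M)" unfolding Gp_def by auto
lemma Gt_sub: "Gt T \<subseteq> Pow (space M)" unfolding Gt_def by auto

lemma sets_Mp: "sets (Mp S) = sigma_sets (space M) (Gp S)"
  unfolding Mp_def using Gp_sub by (rule sets_measure_of)
lemma space_Mp[simp]: "space (Mp S) = space M"
  unfolding Mp_def using Gp_sub by (rule space_measure_of)
lemma sets_Mt: "sets (Mt T) = sigma_sets (space M) (Gt T)"
  unfolding Mt_def using Gt_sub by (rule sets_measure_of)
lemma space_Mt[simp]: "space (Mt T) = space M"
  unfolding Mt_def using Gt_sub by (rule space_measure_of)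

lemma Gp_events: assumes "S \<subseteq> I" shows "Gp S \<subseteq> events"
proof
  fix a assume "a \<in> Gp S"
  then obtain A B where "A \<in> sets X0M" "B \<in> sets (PB S)" and a: "a = x0r -` A \<inter> famR S -` B \<inter> space M"
    unfolding Gp_def by blast
  then have "(x0r -` A \<inter> space M) \<inter> (famR S -` B \<inter> space M) \<in> events"
    using x0r_meas famR_meas[OF assms] by (intro sets.Int measurable_sets) auto
  moreover have "x0r -` A \<inter> famR S -` B \<inter> space M = (x0r -` A \<inter> space M) \<inter> (famR S -` B \<inter> space M)"
    by auto
  ultimately show "a \<in> events" using a by simp
qed

lemma Gt_events: assumes "T \<subseteq> I" shows "Gt T \<subseteq> events"
  using famR_meas[OF assms] unfolding Gt_def by (auto intro!: measurable_sets)

lemma sets_Mp_sub: "S \<subseteq> I \<Longrightarrow> sets (Mp S) \<subseteq> events"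
  unfolding sets_Mp using Gp_events by (intro sets.sigma_sets_subset) auto
lemma sets_Mt_sub: "T \<subseteq> I \<Longrightarrow> sets (Mt T) \<subseteq> events"
  unfolding sets_Mt using Gt_events by (intro sets.sigma_sets_subset) auto

lemma meas_sub:
  assumes "sets A \<subseteq> events" "space A = space M" "f \<in> measurable A B"
  shows "f \<in> measurable M B"
  using assms unfolding measurable_def by auto

lemma x0r_Mp: assumes "S \<subseteq> I" shows "x0r \<in> measurable (Mp S) X0M"
proof (rule measurableI)
  fix \<omega> assume "\<omega> \<in> space (Mp S)"
  then show "x0r \<omega> \<in> space X0M" using x0r_meas by (auto intro: measurable_space)
next
  fix A assume A: "A \<in> sets X0M"
  have "x0r -` A \<inter> space (Mp S) = x0r -` A \<inter> famR S -` space (PB S) \<inter> space M"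
    using famR_meas[OF assms] by (auto intro: measurable_space)
  also have "\<dots> \<in> Gp S" unfolding Gp_def using A by blast
  finally show "x0r -` A \<inter> space (Mp S) \<in> sets (Mp S)"
    unfolding sets_Mp by auto
qed

lemma famR_Mp: assumes "S \<subseteq> I" shows "famR S \<in> measurable (Mp S) (PB S)"
proof (rule measurableI)
  fix \<omega> assume "\<omega> \<in> space (Mp S)"
  then show "famR S \<omega> \<in> space (PB S)" using famR_meas[OF assms] by (auto intro: measurable_space)
next
  fix A assume A: "A \<in> sets (PB S)"
  have "famR S -` A \<inter> space (Mp S) = x0r -` space X0M \<inter> famR S -` A \<inter> space M"
    using x0r_meas by (auto intro: measurable_space)
  also have "\<dots> \<in> Gp S" unfolding Gp_def using A by blast
  finally show "famR S -` A \<inter> space (Mp S) \<in> sets (Mp S)"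
    unfolding sets_Mp by auto
qed

lemma famR_Mt: assumes "T \<subseteq> I" shows "famR T \<in> measurable (Mt T) (PB T)"
proof (rule measurableI)
  fix \<omega> assume "\<omega> \<in> space (Mt T)"
  then show "famR T \<omega> \<in> space (PB T)" using famR_meas[OF assms] by (auto intro: measurable_space)
next
  fix A assume A: "A \<in> sets (PB T)"
  have "famR T -` A \<inter> space (Mt T) \<in> Gt T" unfolding Gt_def using A by auto
  then show "famR T -` A \<inter> space (Mt T) \<in> sets (Mt T)"
    unfolding sets_Mt by auto
qed

lemma fam_Mp: assumes "S \<subseteq> I" "j \<in> S" shows "basic_family adj \<xi> j \<in> borel_measurable (Mp S)"
proof -
  have "(\<lambda>\<omega>. famR S \<omega> j) \<in> borel_measurable (Mp S)"
    using measurable_compose[OF famR_Mp[OF assms(1)] measurable_component_singleton[OF assms(2)]] .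
  then show ?thesis using assms(2) by simp
qed

lemma fam_Mt: assumes "T \<subseteq> I" "j \<in> T" shows "basic_family adj \<xi> j \<in> borel_measurable (Mt T)"
proof -
  have "(\<lambda>\<omega>. famR T \<omega> j) \<in> borel_measurable (Mt T)"
    using measurable_compose[OF famR_Mt[OF assms(1)] measurable_component_singleton[OF assms(2)]] .
  then show ?thesis using assms(2) by simp
qed

lemma x0_Mp: assumes "S \<subseteq> I" "i \<in> {1..N}" shows "(\<lambda>\<omega>. x0 \<omega> i) \<in> borel_measurable (Mp S)"
proof -
  have "(\<lambda>\<omega>. x0r \<omega> i) \<in> borel_measurable (Mp S)"
    using measurable_compose[OF x0r_Mp[OF assms(1)] measurable_component_singleton[OF assms(2)]] .
  then show ?thesis using assms(2) by simp
qed

lemma indep_set_mono: "indep_set A B \<Longrightarrow> A' \<subseteq> A \<Longrightarrow> B' \<subseteq> B \<Longrightarrow> indep_set A' B'"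
  unfolding indep_sets2_eq by blast

lemma indep_Mp_Mt:
  assumes ST: "S \<subseteq> I" "T \<subseteq> I" "S \<inter> T = {}"
  shows "indep_set (sets (Mp S)) (sets (Mt T))"
  unfolding sets_Mp sets_Mt using indep_Gp_Gt[OF ST] .

lemma indep_events_MpMt:
  assumes ST: "S \<subseteq> I" "T \<subseteq> I" "S \<inter> T = {}" and "A \<in> sets (Mp S)" "B \<in> sets (Mt T)"
  shows "prob (A \<inter> B) = prob A * prob B"
  using indep_setD[OF indep_Mp_Mt[OF ST] assms(4,5)] .

lemma indep_var_MpMt:
  fixes X Y :: "'a \<Rightarrow> real"
  assumes ST: "S \<subseteq> I" "T \<subseteq> I" "S \<inter> T = {}"
    and X: "X \<in> borel_measurable (Mp S)" and Y: "Y \<in> borel_measurable (Mt T)"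
  shows "indep_var borel X borel Y"
  unfolding indep_var_eq
proof (intro conjI)
  show "random_variable borel X" using meas_sub[OF sets_Mp_sub[OF ST(1)] space_Mp X] .
  show "random_variable borel Y" using meas_sub[OF sets_Mt_sub[OF ST(2)] space_Mt Y] .
  have 1: "sigma_sets (space M) {X -` A \<inter> space M |A. A \<in> sets borel} \<subseteq> sets (Mp S)"
    using sets.sigma_sets_subset[of "{X -` A \<inter> space M |A. A \<in> sets borel}" "Mp S"]
      measurable_sets[OF X] by auto
  have 2: "sigma_sets (space M) {Y -` A \<inter> space M |A. A \<in> sets borel} \<subseteq> sets (Mt T)"
    using sets.sigma_sets_subset[of "{Y -` A \<inter> space M |A. A \<in> sets borel}" "Mt T"]
      measurable_sets[OF Y] by auto
  show "indep_set (sigma_sets (space M) {X -` A \<inter> space M |A. A \<in> sets borel})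
     (sigma_sets (space M) {Y -` A \<inter> space M |A. A \<in> sets borel})"
    using indep_set_mono[OF indep_Mp_Mt[OF ST] 1 2] .
qed



definition "Pairs = {(i,l). 1 \<le> i \<and> i < l \<and> l \<le> N}"
definition "Pk k = {j \<in> I. (case j of Inl (t,_,_) \<Rightarrow> t < k | Inr (_,t) \<Rightarrow> t < k)}"
definition Gk :: "nat \<Rightarrow> ((nat \<times> nat \<times> nat) + (nat \<times> nat)) set" where "Gk k = (\<lambda>(i,l). Inl (k,i,l)) ` Pairs"
definition Nk :: "nat \<Rightarrow> ((nat \<times> nat \<times> nat) + (nat \<times> nat)) set" where "Nk k = (\<lambda>i. Inr (i,k)) ` {1..N}"

lemma Pairs_finite: "finite Pairs"
  by (rule finite_subset[of _ "{1..N} \<times> {1..N}"]) (auto simp: Pairs_def)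

lemma Gk_I: "Gk k \<subseteq> I" by (auto simp: Gk_def Pairs_def basic_index_def)
lemma Nk_I: "Nk k \<subseteq> I" by (auto simp: Nk_def basic_index_def)
lemma Pk_I: "Pk k \<subseteq> I" by (auto simp: Pk_def)
lemma Pk_mono: "k \<le> k' \<Longrightarrow> Pk k \<subseteq> Pk k'" by (auto simp: Pk_def split: sum.splits)
lemma Gk_Pk: "Gk k \<subseteq> Pk (Suc k)" by (auto simp: Gk_def Pk_def Pairs_def basic_index_def)
lemma Nk_Pk: "Nk k \<subseteq> Pk (Suc k)" by (auto simp: Nk_def Pk_def basic_index_def)
lemma Pk_Gk: "Pk k \<inter> Gk k = {}" by (auto simp: Gk_def Pk_def)
lemma Pk_Nk: "Pk k \<inter> Nk k = {}" by (auto simp: Nk_def Pk_def)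
lemma Gk_Nk: "Gk k \<inter> Nk k = {}" by (auto simp: Nk_def Gk_def)

lemma adjbit_Mp:
  assumes S: "S \<subseteq> I" "Gk k \<subseteq> S" and ij: "i \<in> {1..N}" "j \<in> {1..N}"
  shows "(\<lambda>\<omega>. of_bool (j = i \<or> adj k i j \<omega>) :: real) \<in> borel_measurable (Mp S)"
proof -
  consider "j = i" | "i < j" | "j < i" by linarith
  then show ?thesis
  proof cases
    case 1 then show ?thesis by simp
  next
    case 2
    then have "Inl (k,i,j) \<in> S" using S(2) ij by (auto simp: Gk_def Pairs_def)
    from fam_Mp[OF S(1) this] have "(\<lambda>\<omega>. of_bool (adj k i j \<omega>) :: real) \<in> borel_measurable (Mp S)"
      by (simp add: basic_family_def)
    then show ?thesis using 2 by simp
  next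
    case 3
    then have "Inl (k,j,i) \<in> S" using S(2) ij by (auto simp: Gk_def Pairs_def)
    from fam_Mp[OF S(1) this] have "(\<lambda>\<omega>. of_bool (adj k j i \<omega>) :: real) \<in> borel_measurable (Mp S)"
      by (simp add: basic_family_def)
    then show ?thesis using 3 adj_sym
      by (subst measurable_cong[where g="\<lambda>\<omega>. of_bool (adj k j i \<omega>)"]) auto
  qed
qed

lemma noise_Mp:
  assumes "S \<subseteq> I" "Inr (i,k) \<in> S" shows "\<xi> i k \<in> borel_measurable (Mp S)"
  using fam_Mp[OF assms] by (simp add: basic_family_def)

lemma card_filter_sum: "finite A \<Longrightarrow> real (card {j\<in>A. P j}) = (\<Sum>j\<in>A. of_bool (P j))"
proof -
  assume fin: "finite A"
  have "real (card {j\<in>A. P j}) = (\<Sum>j\<in>{j\<in>A. P j}. 1)" by simp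
  also have "\<dots> = (\<Sum>j\<in>A. if P j then 1 else 0)" using sum.inter_filter[OF fin, of "\<lambda>_. 1::real" P] .
  also have "\<dots> = (\<Sum>j\<in>A. of_bool (P j))" by (rule sum.cong) auto
  finally show ?thesis .
qed

lemma local_avg_formula:
  "local_avg N g x i = (\<Sum>j\<in>{1..N}. x j * of_bool (j = i \<or> g i j)) / (\<Sum>j\<in>{1..N}. of_bool (j = i \<or> g i j))"
proof -
  have 1: "sum x {j\<in>{1..N}. j = i \<or> g i j} = (\<Sum>j\<in>{1..N}. x j * of_bool (j = i \<or> g i j))"
    by (simp add: sum.inter_filter) (rule sum.cong, auto)
  show ?thesis unfolding local_avg_def nbhd_def 1 card_filter_sum[OF finite_atLeastAtMost] ..
qed

abbreviation "st k \<omega> i \<equiv> state N adj \<xi> x0 k \<omega> i"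
definition "v k i \<omega> = local_avg N (\<lambda>a b. adj k a b \<omega>) (\<lambda>j. st k \<omega> j) i"

lemma st_0: "st 0 \<omega> i = x0 \<omega> i" by (simp add: state_def)
lemma st_Suc: "st (Suc k) \<omega> i = sgn (v k i \<omega> + \<xi> i k \<omega>)"
  by (simp add: state_def v_def)

lemma st_Mp:
  assumes "S \<subseteq> I" "Pk k \<subseteq> S" "i \<in> {1..N}"
  shows "(\<lambda>\<omega>. st k \<omega> i) \<in> borel_measurable (Mp S)"
  using assms
proof (induction k arbitrary: i)
  case 0
  then show ?case using x0_Mp[OF 0(1,3)] by (simp add: st_0)
next
  case (Suc k)
  have S2: "Pk k \<subseteq> S" "Gk k \<subseteq> S" "Inr (i,k) \<in> S"
  proof -
    have "Pk k \<subseteq> Pk (Suc k)" by (rule Pk_mono) simp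
    then show "Pk k \<subseteq> S" using Suc.prems(2) by blast
    show "Gk k \<subseteq> S" using Suc.prems(2) Gk_Pk[of k] by blast
    have "Inr (i,k) \<in> Nk k" using Suc.prems(3) by (auto simp: Nk_def)
    then show "Inr (i,k) \<in> S" using Suc.prems(2) Nk_Pk[of k] by blast
  qed
  have IH: "j \<in> {1..N} \<Longrightarrow> (\<lambda>\<omega>. st k \<omega> j) \<in> borel_measurable (Mp S)" for j
    using Suc.IH[OF Suc.prems(1) S2(1)] by auto
  have A: "j \<in> {1..N} \<Longrightarrow> (\<lambda>\<omega>. of_bool (j = i \<or> adj k i j \<omega>) :: real) \<in> borel_measurable (Mp S)" for j
    by (rule adjbit_Mp[OF Suc.prems(1) S2(2) Suc.prems(3)])
  have M1: "(\<lambda>\<omega>. \<Sum>j\<in>{1..N}. st k \<omega> j * of_bool (j = i \<or> adj k i j \<omega>)) \<in> borel_measurable (Mp S)"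
  proof (rule borel_measurable_sum)
    fix j assume "j \<in> {1..N}"
    then show "(\<lambda>\<omega>. st k \<omega> j * of_bool (j = i \<or> adj k i j \<omega>)) \<in> borel_measurable (Mp S)"
      using IH A by (intro borel_measurable_times)
  qed
  have M2: "(\<lambda>\<omega>. \<Sum>j\<in>{1..N}. of_bool (j = i \<or> adj k i j \<omega>) :: real) \<in> borel_measurable (Mp S)"
    using A by (rule borel_measurable_sum)
  have E: "(\<lambda>\<omega>. (\<Sum>j\<in>{1..N}. st k \<omega> j * of_bool (j = i \<or> adj k i j \<omega>)) / (\<Sum>j\<in>{1..N}. of_bool (j = i \<or> adj k i j \<omega>))
       + \<xi> i k \<omega>) \<in> borel_measurable (Mp S)"
    using borel_measurable_add[OF borel_measurable_divide[OF M1 M2] noise_Mp[OF Suc.prems(1) S2(3)]] .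
  have "(\<lambda>\<omega>. sgn ((\<Sum>j\<in>{1..N}. st k \<omega> j * of_bool (j = i \<or> adj k i j \<omega>)) / (\<Sum>j\<in>{1..N}. of_bool (j = i \<or> adj k i j \<omega>))
       + \<xi> i k \<omega>)) \<in> borel_measurable (Mp S)"
    using measurable_compose[OF E borel_measurable_sgn] by simp
  then show ?case by (simp add: st_Suc v_def local_avg_formula)
qed

lemma v_Mp:
  assumes "S \<subseteq> I" "Pk k \<subseteq> S" "Gk k \<subseteq> S" "i \<in> {1..N}"
  shows "v k i \<in> borel_measurable (Mp S)"
proof -
  have IH: "j \<in> {1..N} \<Longrightarrow> (\<lambda>\<omega>. st k \<omega> j) \<in> borel_measurable (Mp S)" for j
    using st_Mp[OF assms(1,2)] by auto
  have A: "j \<in> {1..N} \<Longrightarrow> (\<lambda>\<omega>. of_bool (j = i \<or> adj k i j \<omega>) :: real) \<in> borel_measurable (Mp S)" for j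
    by (rule adjbit_Mp[OF assms(1,3,4)])
  have "(\<lambda>\<omega>. (\<Sum>j\<in>{1..N}. st k \<omega> j * of_bool (j = i \<or> adj k i j \<omega>)) / (\<Sum>j\<in>{1..N}. of_bool (j = i \<or> adj k i j \<omega>))
       ) \<in> borel_measurable (Mp S)"
  proof -
    have M1: "(\<lambda>\<omega>. \<Sum>j\<in>{1..N}. st k \<omega> j * of_bool (j = i \<or> adj k i j \<omega>)) \<in> borel_measurable (Mp S)"
    proof (rule borel_measurable_sum)
      fix j assume "j \<in> {1..N}"
      then show "(\<lambda>\<omega>. st k \<omega> j * of_bool (j = i \<or> adj k i j \<omega>)) \<in> borel_measurable (Mp S)"
        using IH A by (intro borel_measurable_times)
    qed
    have M2: "(\<lambda>\<omega>. \<Sum>j\<in>{1..N}. of_bool (j = i \<or> adj k i j \<omega>) :: real) \<in> borel_measurable (Mp S)"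
      using A by (rule borel_measurable_sum)
    show ?thesis using borel_measurable_divide[OF M1 M2] .
  qed
  moreover have "v k i = (\<lambda>\<omega>. (\<Sum>j\<in>{1..N}. st k \<omega> j * of_bool (j = i \<or> adj k i j \<omega>)) / (\<Sum>j\<in>{1..N}. of_bool (j = i \<or> adj k i j \<omega>)))"
    by (rule ext) (simp only: v_def local_avg_formula)
  ultimately show ?thesis by simp
qed

lemma st_M: "i \<in> {1..N} \<Longrightarrow> (\<lambda>\<omega>. st k \<omega> i) \<in> borel_measurable M"
  using meas_sub[OF sets_Mp_sub[OF Pk_I] space_Mp st_Mp[OF Pk_I order_refl]] .

lemma st_vals: "\<omega> \<in> space M \<Longrightarrow> i \<in> {1..N} \<Longrightarrow> st k \<omega> i \<in> {-1,0,1}"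
proof (cases k)
  case 0
  assume "\<omega> \<in> space M" "i \<in> {1..N}"
  then have "x0 \<omega> i \<in> {1,-1}" using x0_vals by blast
  then show ?thesis using 0 by (auto simp: st_0)
next
  case (Suc k')
  have "sgn (x::real) \<in> {-1,0,1}" for x by (simp add: sgn_if)
  then show ?thesis unfolding Suc st_Suc by blast
qed

lemma xi_M: "i \<in> {1..N} \<Longrightarrow> \<xi> i k \<in> borel_measurable M"
  using fam_meas[of "Inr (i,k)"] by (auto simp: basic_index_def basic_family_def)

lemma noise_prob:
  assumes i: "i \<in> {1..N}" and A: "A \<in> sets borel"
  shows "prob (\<xi> i k -` A \<inter> space M) = measure lborel ({-\<eta>..\<eta>} \<inter> A) / (2*\<eta>)"
proof -
  have m: "\<xi> i k \<in> measurable M lborel" using xi_M[OF i] by (simp add: measurable_lborel1)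
  have A': "A \<in> sets lborel" using A by simp
  have "prob (\<xi> i k -` A \<inter> space M) = measure (distr M lborel (\<xi> i k)) A"
    using measure_distr[OF m A'] by simp
  also have "\<dots> = measure (uniform_measure lborel {-\<eta>..\<eta>}) A"
    using noise i by simp
  also have "\<dots> = enn2real (emeasure lborel ({-\<eta>..\<eta>} \<inter> A) / emeasure lborel {-\<eta>..\<eta>})"
    unfolding measure_def using A' by (subst emeasure_uniform_measure) auto
  also have "emeasure lborel {-\<eta>..\<eta>} = ennreal (2*\<eta>)"
    using eta_pos by (subst emeasure_lborel_Icc) auto
  also have "emeasure lborel ({-\<eta>..\<eta>} \<inter> A) = ennreal (measure lborel ({-\<eta>..\<eta>} \<inter> A))"
  proof (rule emeasure_eq_ennreal_measure)
    have "emeasure lborel ({-\<eta>..\<eta>} \<inter> A) \<le> emeasure lborel {-\<eta>..\<eta>}"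
      using A' by (intro emeasure_mono) auto
    also have "\<dots> < \<top>" using eta_pos by (subst emeasure_lborel_Icc) auto
    finally show "emeasure lborel ({-\<eta>..\<eta>} \<inter> A) \<noteq> \<top>" by simp
  qed
  also have "ennreal (measure lborel ({-\<eta>..\<eta>} \<inter> A)) / ennreal (2*\<eta>) = ennreal (measure lborel ({-\<eta>..\<eta>} \<inter> A) / (2*\<eta>))"
    using eta_pos by (intro divide_ennreal) auto
  finally show ?thesis using eta_pos by (simp add: enn2real_ennreal)
qed

lemma noise_gt:
  assumes i: "i \<in> {1..N}" and c: "-\<eta> \<le> c" "c \<le> \<eta>"
  shows "prob (\<xi> i k -` {c<..} \<inter> space M) = (\<eta> - c) / (2*\<eta>)"
proof -
  have "{-\<eta>..\<eta>} \<inter> {c<..} = {c<..\<eta>}" using c by auto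
  then show ?thesis using noise_prob[OF i, of "{c<..}"] c by (simp add: measure_lborel_Ioc)
qed

lemma noise_lt:
  assumes i: "i \<in> {1..N}" and c: "-\<eta> \<le> c" "c \<le> \<eta>"
  shows "prob (\<xi> i k -` {..<c} \<inter> space M) = (c + \<eta>) / (2*\<eta>)"
proof -
  have "{-\<eta>..\<eta>} \<inter> {..<c} = {-\<eta>..<c}" using c by auto
  then show ?thesis using noise_prob[OF i, of "{..<c}"] c by (simp add: measure_lborel_Ico)
qed

lemma noise_le_m1:
  assumes i: "i \<in> {1..N}" and e: "\<eta> \<le> 1"
  shows "prob (\<xi> i k -` {..-1} \<inter> space M) = 0"
proof -
  have "{-\<eta>..\<eta>} \<inter> {..-1} = {-\<eta>..-1}" using e eta_pos by auto
  moreover have "measure lborel {-\<eta>..-1} = 0"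
    using e by (cases "\<eta> = 1") auto
  ultimately show ?thesis using noise_prob[OF i, of "{..-1}"] e by simp
qed

lemma noise_ge_1:
  assumes i: "i \<in> {1..N}" and e: "\<eta> \<le> 1"
  shows "prob (\<xi> i k -` {1..} \<inter> space M) = 0"
proof -
  have "{-\<eta>..\<eta>} \<inter> {1..} = {1..\<eta>}" using e eta_pos by auto
  moreover have "measure lborel {1..\<eta>} = 0"
    using e by (cases "\<eta> = 1") auto
  ultimately show ?thesis using noise_prob[OF i, of "{1..}"] e by simp
qed

lemma noise_sgn:
  assumes i: "i \<in> {1..N}" and a: "\<bar>a\<bar> \<le> 1" and e: "1 < \<eta>"
  shows "(\<integral>\<omega>. sgn (a + \<xi> i k \<omega>) \<partial>M) = a / \<eta>"
proof -
  define A1 where "A1 = \<xi> i k -` {-a<..} \<inter> space M"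
  define A2 where "A2 = \<xi> i k -` {..< -a} \<inter> space M"
  have ev: "A1 \<in> events" "A2 \<in> events"
    unfolding A1_def A2_def using xi_M[OF i] by (auto intro!: measurable_sets)
  have "(\<integral>\<omega>. sgn (a + \<xi> i k \<omega>) \<partial>M) = (\<integral>\<omega>. indicator A1 \<omega> - indicator A2 \<omega> \<partial>M)"
    by (rule Bochner_Integration.integral_cong) (auto simp: A1_def A2_def indicator_def sgn_if)
  also have "\<dots> = (\<integral>\<omega>. indicator A1 \<omega> \<partial>M) - (\<integral>\<omega>. indicator A2 \<omega> \<partial>M)"
    using ev by (intro Bochner_Integration.integral_diff) (auto simp: integrable_indicator_iff less_top[symmetric] emeasure_finite Int_absorb2 sets.sets_into_space)
  also have "\<dots> = prob A1 - prob A2"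
    using ev by (simp add: integral_indicator Int_absorb2 sets.sets_into_space)
  also have "prob A1 = (\<eta> + a) / (2*\<eta>)"
    unfolding A1_def using noise_gt[OF i, of "-a" k] a e by simp
  also have "prob A2 = (\<eta> - a) / (2*\<eta>)"
    unfolding A2_def using noise_lt[OF i, of "-a" k] a e by simp
  finally show ?thesis using eta_pos by (simp add: field_simps)
qed

lemma sum_delta_real:
  assumes "finite R" "x \<in> R"
  shows "(\<Sum>a\<in>R. of_bool (a = x) * g a) = (g x :: real)"
proof -
  have "(\<Sum>a\<in>R. of_bool (a = x) * g a) = (\<Sum>a\<in>R. if a = x then g a else 0)"
    by (rule sum.cong) auto
  also have "\<dots> = g x" using assms by (simp add: sum.delta')
  finally show ?thesis .
qed

lemma bounded_integrable:
  fixes f :: "'a \<Rightarrow> real"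
  assumes "f \<in> borel_measurable M" "\<And>\<omega>. \<omega> \<in> space M \<Longrightarrow> \<bar>f \<omega>\<bar> \<le> B"
  shows "integrable M f"
  using assms by (intro integrable_const_bound[where B=B]) (auto intro!: AE_I2)

lemma sum_int_vals:
  assumes "finite A" "\<forall>j\<in>A. f j \<in> {-1,0,1::real}"
  shows "\<exists>s::int. sum f A = of_int s \<and> \<bar>s\<bar> \<le> int (card A)"
  using assms
proof (induction A rule: finite_induct)
  case empty then show ?case by auto
next
  case (insert x F)
  then obtain s where s: "sum f F = of_int s" "\<bar>s\<bar> \<le> int (card F)" by auto
  from insert.prems have "f x \<in> {-1,0,1}" by auto
  define t :: int where "t = (if f x = -1 then -1 else if f x = 0 then 0 else 1)"
  have "f x = of_int t \<and> \<bar>t\<bar> \<le> 1" using \<open>f x \<in> {-1,0,1}\<close> by (auto simp: t_def)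
  then have t: "f x = of_int t" "\<bar>t\<bar> \<le> 1" by auto
  have 1: "sum f (insert x F) = of_int (t + s)" using insert.hyps s t by simp
  have 2: "\<bar>t + s\<bar> \<le> int (card (insert x F))" using insert.hyps s(2) t(2) abs_triangle_ineq[of t s] by simp
  show ?case using 1 2 by blast
qed

definition "Rset = {a. \<bar>a\<bar> \<le> 1} \<inter> (\<lambda>(s,c). real_of_int s / real c) ` ({-int N..int N} \<times> {1..N})"

lemma Rset_finite: "finite Rset" unfolding Rset_def
  by (intro finite_Int disjI2 finite_imageI finite_cartesian_product) auto

lemma v_Rset:
  assumes "\<omega> \<in> space M" "i \<in> {1..N}"
  shows "v k i \<omega> \<in> Rset"
proof -
  define nb where "nb = nbhd N (\<lambda>a b. adj k a b \<omega>) i"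
  have nbs: "nb \<subseteq> {1..N}" "i \<in> nb" unfolding nb_def nbhd_def using assms by auto
  have fin: "finite nb" using nbs by (auto intro: finite_subset)
  have c1: "0 < card nb" using fin nbs card_gt_0_iff by blast
  have c2: "card nb \<le> N" using card_mono[OF _ nbs(1)] by simp
  have "\<forall>j\<in>nb. st k \<omega> j \<in> {-1,0,1}"
  proof
    fix j assume "j \<in> nb"
    then have "j \<in> {1..N}" using nbs by auto
    then show "st k \<omega> j \<in> {-1,0,1}" using st_vals[OF assms(1)] by blast
  qed
  from sum_int_vals[OF fin this] obtain s where s: "sum (st k \<omega>) nb = of_int s" "\<bar>s\<bar> \<le> int (card nb)"
    by blast
  have v: "v k i \<omega> = of_int s / real (card nb)"
    unfolding v_def local_avg_def nb_def[symmetric] s(1) ..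
  have cpos: "real (card nb) > 0" using c1 by simp
  have sc: "\<bar>real_of_int s\<bar> \<le> real (card nb)" using s(2) by linarith
  have "\<bar>of_int s / real (card nb)\<bar> = \<bar>real_of_int s\<bar> / real (card nb)"
    by (simp add: abs_divide)
  also have "\<dots> \<le> 1" using sc cpos by (simp add: divide_le_eq_1)
  finally have vb: "\<bar>v k i \<omega>\<bar> \<le> 1" unfolding v .
  have "(s, card nb) \<in> {-int N..int N} \<times> {1..N}" using s(2) c1 c2 by auto
  then have "v k i \<omega> \<in> (\<lambda>(s,c). real_of_int s / real c) ` ({-int N..int N} \<times> {1..N})"
    unfolding v by (rule rev_image_eqI) simp
  then show ?thesis unfolding Rset_def using vb by blast
qed

lemma st_bound: "\<omega> \<in> space M \<Longrightarrow> i \<in> {1..N} \<Longrightarrow> \<bar>st k \<omega> i\<bar> \<le> 1"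
  using st_vals[of \<omega> i k] by auto

lemma v_M: "i \<in> {1..N} \<Longrightarrow> v k i \<in> borel_measurable M"
  using meas_sub[OF sets_Mp_sub[of "Pk k \<union> Gk k"] space_Mp v_Mp[of "Pk k \<union> Gk k"]] Pk_I Gk_I by auto

lemma E_step:
  assumes i: "i \<in> {1..N}" and e: "1 < \<eta>"
  shows "(\<integral>\<omega>. st (Suc k) \<omega> i \<partial>M) = (\<integral>\<omega>. v k i \<omega> \<partial>M) / \<eta>"
proof -
  define S where "S = Pk k \<union> Gk k"
  define T where "T = {Inr (i,k) :: (nat \<times> nat \<times> nat) + (nat \<times> nat)}"
  have ST: "S \<subseteq> I" "T \<subseteq> I" "S \<inter> T = {}"
    unfolding S_def T_def using Pk_I Gk_I i by (auto simp: basic_index_def Pk_def Gk_def)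
  have vS: "v k i \<in> borel_measurable (Mp S)"
    using v_Mp[OF ST(1)] i unfolding S_def by auto
  have xiT: "\<xi> i k \<in> borel_measurable (Mt T)"
    using fam_Mt[OF ST(2), of "Inr (i,k)"] unfolding T_def by (simp add: basic_family_def)
  have X: "(\<lambda>\<omega>. of_bool (a = v k i \<omega>) :: real) \<in> borel_measurable (Mp S)" for a
  proof -
    have "(\<lambda>\<omega>. indicator {a} (v k i \<omega>) :: real) \<in> borel_measurable (Mp S)"
      using measurable_compose[OF vS borel_measurable_indicator[of "{a}"]] by simp
    then show ?thesis by (simp add: indicator_def eq_commute)
  qed
  have Y: "(\<lambda>\<omega>. sgn (a + \<xi> i k \<omega>)) \<in> borel_measurable (Mt T)" for a
    using measurable_compose[OF borel_measurable_add[OF borel_measurable_const xiT] borel_measurable_sgn] by simp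
  have XM: "(\<lambda>\<omega>. of_bool (a = v k i \<omega>) :: real) \<in> borel_measurable M" for a
    using meas_sub[OF sets_Mp_sub[OF ST(1)] space_Mp X] .
  have YM: "(\<lambda>\<omega>. sgn (a + \<xi> i k \<omega>)) \<in> borel_measurable M" for a
    using meas_sub[OF sets_Mt_sub[OF ST(2)] space_Mt Y] .
  have intX: "integrable M (\<lambda>\<omega>. of_bool (a = v k i \<omega>) :: real)" for a
    by (rule bounded_integrable[OF XM, where B=1]) auto
  have intY: "integrable M (\<lambda>\<omega>. sgn (a + \<xi> i k \<omega>))" for a
    by (rule bounded_integrable[OF YM, where B=1]) (auto simp: abs_sgn)
  have "(\<integral>\<omega>. st (Suc k) \<omega> i \<partial>M) = (\<integral>\<omega>. (\<Sum>a\<in>Rset. of_bool (a = v k i \<omega>) * sgn (a + \<xi> i k \<omega>)) \<partial>M)"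
  proof (rule Bochner_Integration.integral_cong)
    fix \<omega> assume "\<omega> \<in> space M"
    then have "v k i \<omega> \<in> Rset" using v_Rset i by auto
    then show "st (Suc k) \<omega> i = (\<Sum>a\<in>Rset. of_bool (a = v k i \<omega>) * sgn (a + \<xi> i k \<omega>))"
      unfolding st_Suc by (rule sum_delta_real[OF Rset_finite, symmetric])
  qed simp
  also have "\<dots> = (\<Sum>a\<in>Rset. (\<integral>\<omega>. of_bool (a = v k i \<omega>) * sgn (a + \<xi> i k \<omega>) \<partial>M))"
    by (rule Bochner_Integration.integral_sum) (intro indep_var_integrable[OF indep_var_MpMt[OF ST X Y] intX intY])
  also have "\<dots> = (\<Sum>a\<in>Rset. (\<integral>\<omega>. of_bool (a = v k i \<omega>) \<partial>M) * (a / \<eta>))"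
  proof (rule sum.cong)
    fix a assume a: "a \<in> Rset"
    have "(\<integral>\<omega>. of_bool (a = v k i \<omega>) * sgn (a + \<xi> i k \<omega>) \<partial>M) =
       (\<integral>\<omega>. of_bool (a = v k i \<omega>) \<partial>M) * (\<integral>\<omega>. sgn (a + \<xi> i k \<omega>) \<partial>M)"
      by (rule indep_var_lebesgue_integral[OF indep_var_MpMt[OF ST X Y] intX intY])
    also have "(\<integral>\<omega>. sgn (a + \<xi> i k \<omega>) \<partial>M) = a / \<eta>"
      using noise_sgn[OF i _ e] a unfolding Rset_def by auto
    finally show "(\<integral>\<omega>. of_bool (a = v k i \<omega>) * sgn (a + \<xi> i k \<omega>) \<partial>M) = (\<integral>\<omega>. of_bool (a = v k i \<omega>) \<partial>M) * (a / \<eta>)" .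
  qed simp
  also have "\<dots> = (\<Sum>a\<in>Rset. (\<integral>\<omega>. of_bool (a = v k i \<omega>) * a \<partial>M)) / \<eta>"
    by (simp add: sum_divide_distrib)
  also have "(\<Sum>a\<in>Rset. (\<integral>\<omega>. of_bool (a = v k i \<omega>) * a \<partial>M)) = (\<integral>\<omega>. (\<Sum>a\<in>Rset. of_bool (a = v k i \<omega>) * a) \<partial>M)"
    by (rule Bochner_Integration.integral_sum[symmetric]) (use intX in auto)
  also have "\<dots> = (\<integral>\<omega>. v k i \<omega> \<partial>M)"
  proof (rule Bochner_Integration.integral_cong)
    fix \<omega> assume "\<omega> \<in> space M"
    then have "v k i \<omega> \<in> Rset" using v_Rset i by auto
    then show "(\<Sum>a\<in>Rset. of_bool (a = v k i \<omega>) * a) = v k i \<omega>"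
      by (rule sum_delta_real[OF Rset_finite])
  qed simp
  finally show ?thesis .
qed

definition "pr = (\<lambda>(i::nat,l::nat). {i,l})"
definition "UP = pr ` Pairs"
definition "Edge k \<omega> = pr ` {p\<in>Pairs. adj k (fst p) (snd p) \<omega>}"
definition "gE E = (\<lambda>a b. {a,b} \<in> E)"
definition "w g i j = (of_bool (j \<in> nbhd N g i) / real (card (nbhd N g i)) :: real)"
definition Bset :: "nat set set \<Rightarrow> (nat \<times> nat \<times> nat) + (nat \<times> nat) \<Rightarrow> real set" where
  "Bset E j = (case j of Inl (_,a,b) \<Rightarrow> {of_bool ({a,b} \<in> E)} | Inr _ \<Rightarrow> {})"
definition "Ev k E = (\<Inter>j\<in>Gk k. basic_family adj \<xi> j -` Bset E j \<inter> space M)"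

lemma Pairs_ne: "Pairs \<noteq> {}"
proof -
  have "(1,2) \<in> Pairs" using N2 by (simp add: Pairs_def)
  then show ?thesis by blast
qed
lemma Gk_ne: "Gk k \<noteq> {}" using Pairs_ne by (auto simp: Gk_def)
lemma Gk_finite: "finite (Gk k)" using Pairs_finite by (auto simp: Gk_def)

lemma pr_inj: "inj_on pr Pairs"
proof (rule inj_onI)
  fix p q assume p: "p \<in> Pairs" and q: "q \<in> Pairs" and e: "pr p = pr q"
  obtain a b c d where pq: "p = (a,b)" "q = (c,d)" by (cases p, cases q) auto
  have "a < b" "c < d" using p q pq by (auto simp: Pairs_def)
  moreover have "{a,b} = {c,d}" using e pq by (simp add: pr_def)
  ultimately show "p = q" using pq by (auto simp: doubleton_eq_iff)
qed

lemma card_UP: "card UP = card Pairs"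
  unfolding UP_def using pr_inj by (rule card_image)
lemma UP_finite: "finite UP" unfolding UP_def using Pairs_finite by simp
lemma card_Gk: "card (Gk k) = card Pairs"
  unfolding Gk_def by (rule card_image) (auto simp: inj_on_def)

lemma local_avg_w: "local_avg N g x i = (\<Sum>j\<in>{1..N}. x j * w g i j)"
proof -
  have nb: "nbhd N g i = {j\<in>{1..N}. j \<in> nbhd N g i}" by (auto simp: nbhd_def)
  have "sum x (nbhd N g i) = (\<Sum>j\<in>{1..N}. if j \<in> nbhd N g i then x j else 0)"
    by (subst nb) (rule sum.inter_filter, simp)
  also have "\<dots> = (\<Sum>j\<in>{1..N}. x j * of_bool (j \<in> nbhd N g i))"
    by (rule sum.cong) auto
  finally have 1: "sum x (nbhd N g i) = (\<Sum>j\<in>{1..N}. x j * of_bool (j \<in> nbhd N g i))" .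
  show ?thesis
    unfolding local_avg_def w_def 1 sum_divide_distrib by (rule sum.cong) auto
qed

lemma Edge_iff:
  assumes "\<omega> \<in> space M" "i \<in> {1..N}" "j \<in> {1..N}" "i \<noteq> j"
  shows "({i,j} \<in> Edge k \<omega>) = adj k i j \<omega>"
proof
  assume "{i,j} \<in> Edge k \<omega>"
  then obtain a b where ab: "(a,b) \<in> Pairs" "adj k a b \<omega>" "{i,j} = {a,b}"
    unfolding Edge_def pr_def by auto
  then consider "i = a" "j = b" | "i = b" "j = a" by (auto simp: doubleton_eq_iff)
  then show "adj k i j \<omega>" using ab adj_sym assms(1) by cases auto
next
  assume a: "adj k i j \<omega>"
  consider "i < j" | "j < i" using assms by linarith
  then show "{i,j} \<in> Edge k \<omega>"
  proof cases
    case 1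
    then have "(i,j) \<in> {p\<in>Pairs. adj k (fst p) (snd p) \<omega>}" using a assms by (auto simp: Pairs_def)
    then show ?thesis unfolding Edge_def by (rule rev_image_eqI) (simp add: pr_def)
  next
    case 2
    then have "(j,i) \<in> {p\<in>Pairs. adj k (fst p) (snd p) \<omega>}" using a assms adj_sym by (auto simp: Pairs_def)
    then show ?thesis unfolding Edge_def by (rule rev_image_eqI) (auto simp: pr_def)
  qed
qed

lemma nbhd_Edge:
  assumes "\<omega> \<in> space M" "i \<in> {1..N}"
  shows "nbhd N (\<lambda>a b. adj k a b \<omega>) i = nbhd N (gE (Edge k \<omega>)) i"
  using Edge_iff[OF assms(1,2)] unfolding nbhd_def gE_def by auto

lemma Edge_UP: "Edge k \<omega> \<subseteq> UP" unfolding Edge_def UP_def by auto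

lemma Ev_iff:
  assumes om: "\<omega> \<in> space M" and E: "E \<subseteq> UP"
  shows "(\<omega> \<in> Ev k E) = (Edge k \<omega> = E)"
proof -
  have "(\<omega> \<in> Ev k E) = (\<forall>p\<in>Pairs. adj k (fst p) (snd p) \<omega> = (pr p \<in> E))"
    using om unfolding Ev_def Gk_def Bset_def basic_family_def pr_def by auto
  also have "\<dots> = (Edge k \<omega> = E)"
  proof
    assume h: "\<forall>p\<in>Pairs. adj k (fst p) (snd p) \<omega> = (pr p \<in> E)"
    show "Edge k \<omega> = E"
    proof
      show "Edge k \<omega> \<subseteq> E" using h unfolding Edge_def by auto
      show "E \<subseteq> Edge k \<omega>"
      proof
        fix e assume "e \<in> E"
        then obtain p where p: "p \<in> Pairs" "e = pr p" using E unfolding UP_def by auto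
        then show "e \<in> Edge k \<omega>" using h \<open>e \<in> E\<close> unfolding Edge_def by auto
      qed
    qed
  next
    assume h: "Edge k \<omega> = E"
    show "\<forall>p\<in>Pairs. adj k (fst p) (snd p) \<omega> = (pr p \<in> E)"
    proof
      fix p assume p: "p \<in> Pairs"
      show "adj k (fst p) (snd p) \<omega> = (pr p \<in> E)"
      proof
        assume "adj k (fst p) (snd p) \<omega>" then show "pr p \<in> E" using h p unfolding Edge_def by auto
      next
        assume "pr p \<in> E"
        then obtain q where q: "q \<in> Pairs" "adj k (fst q) (snd q) \<omega>" "pr p = pr q"
          using h unfolding Edge_def by auto
        then have "p = q" using pr_inj p by (auto dest: inj_onD)
        then show "adj k (fst p) (snd p) \<omega>" using q by simp
      qed
    qed
  qed
  finally show ?thesis .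
qed

lemma Ev_Mt: "Ev k E \<in> sets (Mt (Gk k))"
  unfolding Ev_def
proof (rule sets.finite_INT[OF Gk_finite Gk_ne])
  fix j assume j: "j \<in> Gk k"
  have "basic_family adj \<xi> j -` Bset E j \<inter> space (Mt (Gk k)) \<in> sets (Mt (Gk k))"
    using fam_Mt[OF Gk_I j] by (rule measurable_sets) (auto simp: Bset_def split: sum.splits)
  then show "basic_family adj \<xi> j -` Bset E j \<inter> space M \<in> sets (Mt (Gk k))" by simp
qed

lemma Ev_events: "Ev k E \<in> events"
  using sets_Mt_sub[OF Gk_I] Ev_Mt by auto

lemma prob_Ev: "prob (Ev k E) = (1/2) ^ card Pairs"
proof -
  have "prob (Ev k E) = (\<Prod>j\<in>Gk k. prob (basic_family adj \<xi> j -` Bset E j \<inter> space M))"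
    unfolding Ev_def using Gk_ne Gk_finite Gk_I
    by (intro indep_varsD[OF indep]) (auto simp: Bset_def split: sum.splits)
  also have "\<dots> = (\<Prod>j\<in>Gk k. 1/2)"
  proof (rule prod.cong)
    fix j assume "j \<in> Gk k"
    then obtain a b where ab: "(a,b) \<in> Pairs" "j = Inl (k,a,b)" unfolding Gk_def by auto
    have A: "{\<omega>\<in>space M. adj k a b \<omega>} \<in> events"
    proof -
      have "j \<in> I" using Gk_I \<open>j \<in> Gk k\<close> by blast
      then have "basic_family adj \<xi> j -` {1} \<inter> space M \<in> events"
        by (intro measurable_sets[OF fam_meas]) auto
      moreover have "basic_family adj \<xi> j -` {1} \<inter> space M = {\<omega>\<in>space M. adj k a b \<omega>}"
        using ab by (auto simp: basic_family_def)
      ultimately show ?thesis by simp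
    qed
    have pa: "prob {\<omega>\<in>space M. adj k a b \<omega>} = 1/2" using edges ab by (auto simp: Pairs_def)
    show "prob (basic_family adj \<xi> j -` Bset E j \<inter> space M) = 1/2"
    proof (cases "{a,b} \<in> E")
      case True
      then have "basic_family adj \<xi> j -` Bset E j \<inter> space M = {\<omega>\<in>space M. adj k a b \<omega>}"
        using ab by (auto simp: basic_family_def Bset_def)
      then show ?thesis using pa by simp
    next
      case False
      then have "basic_family adj \<xi> j -` Bset E j \<inter> space M = space M - {\<omega>\<in>space M. adj k a b \<omega>}"
        using ab by (auto simp: basic_family_def Bset_def)
      then show ?thesis using pa prob_compl[OF A] by simp
    qed
  qed simp
  also have "\<dots> = (1/2) ^ card Pairs" by (simp add: card_Gk)
  finally show ?thesis .
qed

lemma w_decomp: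
  assumes om: "\<omega> \<in> space M" and i: "i \<in> {1..N}"
  shows "w (\<lambda>a b. adj k a b \<omega>) i j = (\<Sum>E\<in>Pow UP. indicator (Ev k E) \<omega> * w (gE E) i j)"
proof -
  have "(\<Sum>E\<in>Pow UP. indicator (Ev k E) \<omega> * w (gE E) i j) = (\<Sum>E\<in>Pow UP. of_bool (E = Edge k \<omega>) * w (gE E) i j)"
    by (rule sum.cong) (use Ev_iff[OF om] in \<open>auto simp: indicator_def\<close>)
  also have "\<dots> = w (gE (Edge k \<omega>)) i j"
    by (rule sum_delta_real) (use UP_finite Edge_UP in auto)
  also have "\<dots> = w (\<lambda>a b. adj k a b \<omega>) i j"
    unfolding w_def nbhd_Edge[OF om i] ..
  finally show ?thesis ..
qed

lemma w_row:
  assumes j: "j \<in> {1..N}"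
  shows "(\<Sum>i\<in>{1..N}. w g j i) = 1"
proof -
  define nb where "nb = nbhd N g j"
  have nbs: "nb \<subseteq> {1..N}" "j \<in> nb" unfolding nb_def nbhd_def using j by auto
  have fin: "finite nb" using nbs by (auto intro: finite_subset)
  have c: "real (card nb) > 0" using fin nbs card_gt_0_iff by fastforce
  have "(\<Sum>i\<in>{1..N}. w g j i) = (\<Sum>i\<in>{1..N}. of_bool (i \<in> nb) / real (card nb))"
    unfolding w_def nb_def ..
  also have "\<dots> = (\<Sum>i\<in>{1..N}. of_bool (i \<in> nb)) / real (card nb)"
    by (rule sum_divide_distrib[symmetric])
  also have "(\<Sum>i\<in>{1..N}. of_bool (i \<in> nb)) = real (card {i\<in>{1..N}. i \<in> nb})"
    by (rule card_filter_sum[symmetric]) simp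
  also have "{i\<in>{1..N}. i \<in> nb} = nb" using nbs by auto
  finally show ?thesis using c by simp
qed

lemma W_sym:
  assumes i: "i \<in> {1..N}" and j: "j \<in> {1..N}"
  shows "(\<Sum>E\<in>Pow UP. w (gE E) i j) = (\<Sum>E\<in>Pow UP. w (gE E) j i)"
proof -
  define sw where "sw a = (if a = i then j else if a = j then i else a)" for a
  have sw2: "sw (sw a) = a" for a unfolding sw_def by auto
  have swN: "(sw a \<in> {1..N}) = (a \<in> {1..N})" for a using i j unfolding sw_def by auto
  have swinj: "inj_on sw X" for X by (rule inj_onI) (metis sw2)
  have swimg: "sw ` (sw ` X) = X" for X by (simp add: image_image sw2)
  define \<phi> where "\<phi> E = (image sw) ` E" for E :: "nat set set"
  have phi2: "\<phi> (\<phi> E) = E" for E unfolding \<phi>_def by (simp add: image_image swimg sw2)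
  have memphi: "(X \<in> \<phi> E) = (sw ` X \<in> E)" for X E
  proof
    assume "X \<in> \<phi> E" then show "sw ` X \<in> E" unfolding \<phi>_def using swimg by auto
  next
    assume "sw ` X \<in> E" then have "sw ` (sw ` X) \<in> \<phi> E" unfolding \<phi>_def by blast
    then show "X \<in> \<phi> E" using swimg by simp
  qed
  have phiUP: "\<phi> E \<subseteq> UP" if E: "E \<subseteq> UP" for E
  proof
    fix e assume "e \<in> \<phi> E"
    then have "sw ` e \<in> UP" using memphi E by blast
    then obtain a b where ab: "(a,b) \<in> Pairs" "sw ` e = {a,b}" unfolding UP_def pr_def by auto
    have e: "e = {sw a, sw b}" using arg_cong[OF ab(2), of "image sw"] swimg by simp
    have ar: "a \<in> {1..N}" "b \<in> {1..N}" "a \<noteq> b" using ab(1) by (auto simp: Pairs_def)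
    have r3: "sw a \<noteq> sw b" using ar(3) sw2 by metis
    have r: "sw a \<in> {1..N}" "sw b \<in> {1..N}" "sw a \<noteq> sw b" using ar swN r3 by auto
    show "e \<in> UP"
    proof (cases "sw a < sw b")
      case True
      then have "(sw a, sw b) \<in> Pairs" using r by (auto simp: Pairs_def)
      then show ?thesis unfolding UP_def e by (rule rev_image_eqI) (simp add: pr_def)
    next
      case False
      then have "(sw b, sw a) \<in> Pairs" using r by (auto simp: Pairs_def)
      then show ?thesis unfolding UP_def e by (rule rev_image_eqI) (auto simp: pr_def)
    qed
  qed
  have nbphi: "(c \<in> nbhd N (gE (\<phi> E)) i) = (sw c \<in> nbhd N (gE E) j)" for c E
  proof -
    have "sw ` {i,c} = {j, sw c}" unfolding sw_def by auto
    moreover have "(c = i) = (sw c = j)" using sw2 unfolding sw_def by auto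
    ultimately show ?thesis unfolding nbhd_def gE_def memphi using swN by auto
  qed
  have nbimg: "nbhd N (gE (\<phi> E)) i = sw ` nbhd N (gE E) j" for E
  proof
    show "nbhd N (gE (\<phi> E)) i \<subseteq> sw ` nbhd N (gE E) j"
    proof
      fix c assume "c \<in> nbhd N (gE (\<phi> E)) i"
      then have "sw c \<in> nbhd N (gE E) j" using nbphi by blast
      then show "c \<in> sw ` nbhd N (gE E) j" using sw2 by (metis image_eqI)
    qed
    show "sw ` nbhd N (gE E) j \<subseteq> nbhd N (gE (\<phi> E)) i"
    proof
      fix c assume "c \<in> sw ` nbhd N (gE E) j"
      then obtain d where "d \<in> nbhd N (gE E) j" "c = sw d" by auto
      then show "c \<in> nbhd N (gE (\<phi> E)) i" using nbphi sw2 by auto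
    qed
  qed
  have wphi: "w (gE (\<phi> E)) i j = w (gE E) j i" for E
  proof -
    have "card (nbhd N (gE (\<phi> E)) i) = card (nbhd N (gE E) j)"
      unfolding nbimg by (rule card_image[OF swinj])
    moreover have "(j \<in> nbhd N (gE (\<phi> E)) i) = (i \<in> nbhd N (gE E) j)"
      unfolding nbphi by (simp add: sw_def)
    ultimately show ?thesis unfolding w_def by simp
  qed
  have "(\<Sum>E\<in>Pow UP. w (gE (\<phi> E)) i j) = (\<Sum>E\<in>Pow UP. w (gE E) i j)"
    by (rule sum.reindex_bij_witness[where i=\<phi> and j=\<phi>]) (auto simp: phi2 phiUP)
  then show ?thesis unfolding wphi by simp
qed

lemma st_prod_meas:
  assumes j: "j \<in> {1..N}"
  shows "(\<lambda>\<omega>. st k \<omega> j * indicator (Ev k E) \<omega>) \<in> borel_measurable M"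
  using borel_measurable_times[OF st_M[OF j] borel_measurable_indicator[OF Ev_events]] .

lemma st_prod_int:
  assumes j: "j \<in> {1..N}"
  shows "integrable M (\<lambda>\<omega>. c * (st k \<omega> j * indicator (Ev k E) \<omega>))"
proof -
  have "integrable M (\<lambda>\<omega>. st k \<omega> j * indicator (Ev k E) \<omega>)"
    by (rule bounded_integrable[OF st_prod_meas[OF j], where B=1])
       (use st_bound[OF _ j] in \<open>auto simp: indicator_def abs_mult\<close>)
  then show ?thesis by simp
qed

lemma E_st_Ev:
  assumes j: "j \<in> {1..N}"
  shows "(\<integral>\<omega>. st k \<omega> j * indicator (Ev k E) \<omega> \<partial>M) = (\<integral>\<omega>. st k \<omega> j \<partial>M) * (1/2) ^ card Pairs"
proof -
  have ST: "Pk k \<subseteq> I" "Gk k \<subseteq> I" "Pk k \<inter> Gk k = {}" using Pk_I Gk_I Pk_Gk by auto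
  have X: "(\<lambda>\<omega>. st k \<omega> j) \<in> borel_measurable (Mp (Pk k))" using st_Mp[OF Pk_I order_refl j] .
  have Y: "indicator (Ev k E) \<in> borel_measurable (Mt (Gk k))" using borel_measurable_indicator[OF Ev_Mt] .
  have iX: "integrable M (\<lambda>\<omega>. st k \<omega> j)"
    by (rule bounded_integrable[OF st_M[OF j], where B=1]) (use st_bound[OF _ j] in auto)
  have iY: "integrable M (indicator (Ev k E) :: 'a \<Rightarrow> real)"
    by (rule bounded_integrable[OF borel_measurable_indicator[OF Ev_events], where B=1]) (auto simp: indicator_def)
  have "(\<integral>\<omega>. st k \<omega> j * indicator (Ev k E) \<omega> \<partial>M) = (\<integral>\<omega>. st k \<omega> j \<partial>M) * (\<integral>\<omega>. indicator (Ev k E) \<omega> \<partial>M)"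
    by (rule indep_var_lebesgue_integral[OF indep_var_MpMt[OF ST X Y] iX iY])
  also have "(\<integral>\<omega>. indicator (Ev k E) \<omega> \<partial>M) = prob (Ev k E)"
    using Ev_events by (simp add: integral_indicator Int_absorb2 sets.sets_into_space)
  finally show ?thesis by (simp add: prob_Ev)
qed

lemma E_v:
  assumes i: "i \<in> {1..N}"
  shows "(\<integral>\<omega>. v k i \<omega> \<partial>M) = (\<Sum>j\<in>{1..N}. (\<integral>\<omega>. st k \<omega> j \<partial>M) * ((\<Sum>E\<in>Pow UP. w (gE E) i j) * (1/2) ^ card Pairs))"
proof -
  have pt: "v k i \<omega> = (\<Sum>j\<in>{1..N}. \<Sum>E\<in>Pow UP. w (gE E) i j * (st k \<omega> j * indicator (Ev k E) \<omega>))"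
    if om: "\<omega> \<in> space M" for \<omega>
  proof -
    have "v k i \<omega> = (\<Sum>j\<in>{1..N}. st k \<omega> j * w (\<lambda>a b. adj k a b \<omega>) i j)"
      unfolding v_def local_avg_w ..
    also have "\<dots> = (\<Sum>j\<in>{1..N}. \<Sum>E\<in>Pow UP. w (gE E) i j * (st k \<omega> j * indicator (Ev k E) \<omega>))"
      by (rule sum.cong) (simp_all add: w_decomp[OF om i] sum_distrib_left mult_ac)
    finally show ?thesis .
  qed
  have "(\<integral>\<omega>. v k i \<omega> \<partial>M) = (\<integral>\<omega>. (\<Sum>j\<in>{1..N}. \<Sum>E\<in>Pow UP. w (gE E) i j * (st k \<omega> j * indicator (Ev k E) \<omega>)) \<partial>M)"
    by (rule Bochner_Integration.integral_cong) (simp_all add: pt)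
  also have "\<dots> = (\<Sum>j\<in>{1..N}. (\<integral>\<omega>. (\<Sum>E\<in>Pow UP. w (gE E) i j * (st k \<omega> j * indicator (Ev k E) \<omega>)) \<partial>M))"
  proof (rule Bochner_Integration.integral_sum)
    fix j assume j: "j \<in> {1..N}"
    show "integrable M (\<lambda>\<omega>. \<Sum>E\<in>Pow UP. w (gE E) i j * (st k \<omega> j * indicator (Ev k E) \<omega>))"
      by (rule Bochner_Integration.integrable_sum) (rule st_prod_int[OF j])
  qed
  also have "\<dots> = (\<Sum>j\<in>{1..N}. \<Sum>E\<in>Pow UP. w (gE E) i j * ((\<integral>\<omega>. st k \<omega> j \<partial>M) * (1/2) ^ card Pairs))"
  proof (rule sum.cong)
    fix j assume j: "j \<in> {1..N}"
    have "(\<integral>\<omega>. (\<Sum>E\<in>Pow UP. w (gE E) i j * (st k \<omega> j * indicator (Ev k E) \<omega>)) \<partial>M) =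
        (\<Sum>E\<in>Pow UP. (\<integral>\<omega>. w (gE E) i j * (st k \<omega> j * indicator (Ev k E) \<omega>) \<partial>M))"
      by (rule Bochner_Integration.integral_sum) (rule st_prod_int[OF j])
    also have "\<dots> = (\<Sum>E\<in>Pow UP. w (gE E) i j * ((\<integral>\<omega>. st k \<omega> j \<partial>M) * (1/2) ^ card Pairs))"
      by (rule sum.cong) (simp_all add: E_st_Ev[OF j])
    finally show "(\<integral>\<omega>. (\<Sum>E\<in>Pow UP. w (gE E) i j * (st k \<omega> j * indicator (Ev k E) \<omega>)) \<partial>M) =
        (\<Sum>E\<in>Pow UP. w (gE E) i j * ((\<integral>\<omega>. st k \<omega> j \<partial>M) * (1/2) ^ card Pairs))" .
  qed simp
  also have "\<dots> = (\<Sum>j\<in>{1..N}. (\<integral>\<omega>. st k \<omega> j \<partial>M) * ((\<Sum>E\<in>Pow UP. w (gE E) i j) * (1/2) ^ card Pairs))"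
    by (rule sum.cong) (simp_all add: sum_distrib_left sum_distrib_right mult_ac)
  finally show ?thesis .
qed

lemma W_col:
  assumes j: "j \<in> {1..N}"
  shows "(\<Sum>i\<in>{1..N}. \<Sum>E\<in>Pow UP. w (gE E) i j) = 2 ^ card Pairs"
proof -
  have "(\<Sum>i\<in>{1..N}. \<Sum>E\<in>Pow UP. w (gE E) i j) = (\<Sum>i\<in>{1..N}. \<Sum>E\<in>Pow UP. w (gE E) j i)"
    by (rule sum.cong) (simp_all add: W_sym[OF _ j])
  also have "\<dots> = (\<Sum>E\<in>Pow UP. \<Sum>i\<in>{1..N}. w (gE E) j i)" by (rule sum.swap)
  also have "\<dots> = (\<Sum>E\<in>Pow UP. 1)" by (rule sum.cong) (use w_row[OF j] in auto)
  also have "\<dots> = 2 ^ card Pairs" using UP_finite by (simp add: card_Pow card_UP)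
  finally show ?thesis .
qed

lemma st_int: "i \<in> {1..N} \<Longrightarrow> integrable M (\<lambda>\<omega>. st k \<omega> i)"
  by (rule bounded_integrable[OF st_M, where B=1]) (use st_bound in auto)

lemma E_S:
  "integral\<^sup>L M (state_sum N adj \<xi> x0 k) = (\<Sum>i\<in>{1..N}. (\<integral>\<omega>. st k \<omega> i \<partial>M))"
  unfolding state_sum_def by (rule Bochner_Integration.integral_sum) (rule st_int, simp)

lemma E_S_step:
  assumes e: "1 < \<eta>"
  shows "integral\<^sup>L M (state_sum N adj \<xi> x0 (Suc k)) = integral\<^sup>L M (state_sum N adj \<xi> x0 k) / \<eta>"
proof -
  define c :: real where "c = (1/2) ^ card Pairs"
  define Est where "Est j = (\<integral>\<omega>. st k \<omega> j \<partial>M)" for j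
  have "integral\<^sup>L M (state_sum N adj \<xi> x0 (Suc k)) = (\<Sum>i\<in>{1..N}. (\<integral>\<omega>. v k i \<omega> \<partial>M) / \<eta>)"
    unfolding E_S by (rule sum.cong) (simp_all add: E_step e)
  also have "\<dots> = (\<Sum>i\<in>{1..N}. (\<Sum>j\<in>{1..N}. Est j * ((\<Sum>E\<in>Pow UP. w (gE E) i j) * c)) / \<eta>)"
    unfolding Est_def c_def by (rule sum.cong[OF refl], subst E_v) auto
  also have "\<dots> = (\<Sum>i\<in>{1..N}. \<Sum>j\<in>{1..N}. Est j * ((\<Sum>E\<in>Pow UP. w (gE E) i j) * c)) / \<eta>"
    by (rule sum_divide_distrib[symmetric])
  also have "(\<Sum>i\<in>{1..N}. \<Sum>j\<in>{1..N}. Est j * ((\<Sum>E\<in>Pow UP. w (gE E) i j) * c)) =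
      (\<Sum>j\<in>{1..N}. \<Sum>i\<in>{1..N}. Est j * ((\<Sum>E\<in>Pow UP. w (gE E) i j) * c))"
    by (rule sum.swap)
  also have "\<dots> = (\<Sum>j\<in>{1..N}. Est j * c * (\<Sum>i\<in>{1..N}. \<Sum>E\<in>Pow UP. w (gE E) i j))"
    by (rule sum.cong) (simp_all add: sum_distrib_left mult_ac)
  also have "\<dots> = (\<Sum>j\<in>{1..N}. Est j)"
  proof (rule sum.cong)
    fix j assume j: "j \<in> {1..N}"
    show "Est j * c * (\<Sum>i\<in>{1..N}. \<Sum>E\<in>Pow UP. w (gE E) i j) = Est j"
      unfolding W_col[OF j] c_def by (simp add: power_one_over)
  qed simp
  finally show ?thesis unfolding E_S Est_def .
qed

definition "Cns t \<omega> = ((\<forall>i\<in>{1..N}. st t \<omega> i = 1) \<or> (\<forall>i\<in>{1..N}. st t \<omega> i = -1))"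
definition "D k = {\<omega>\<in>space M. \<forall>t\<le>k. \<not> Cns t \<omega>}"
definition "Tk k = Gk k \<union> Nk k"
definition Cset :: "bool \<Rightarrow> (nat \<times> nat \<times> nat) + (nat \<times> nat) \<Rightarrow> real set" where
  "Cset b j = (case j of Inl _ \<Rightarrow> {1} | Inr _ \<Rightarrow> (if b then {0<..} else {..<0}))"
definition "H b k = (\<Inter>j\<in>Tk k. basic_family adj \<xi> j -` Cset b j \<inter> space M)"

lemma Tk_I: "Tk k \<subseteq> I" using Gk_I Nk_I by (auto simp: Tk_def)
lemma Tk_finite: "finite (Tk k)" using Gk_finite by (auto simp: Tk_def Nk_def)
lemma Tk_ne: "Tk k \<noteq> {}" using Gk_ne by (auto simp: Tk_def)
lemma Pk_Tk: "Pk k \<inter> Tk k = {}" using Pk_Gk Pk_Nk by (auto simp: Tk_def)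

lemma H_Mt: "H b k \<in> sets (Mt (Tk k))"
  unfolding H_def
proof (rule sets.finite_INT[OF Tk_finite Tk_ne])
  fix j assume j: "j \<in> Tk k"
  have "basic_family adj \<xi> j -` Cset b j \<inter> space (Mt (Tk k)) \<in> sets (Mt (Tk k))"
    using fam_Mt[OF Tk_I j] by (rule measurable_sets) (auto simp: Cset_def split: sum.splits)
  then show "basic_family adj \<xi> j -` Cset b j \<inter> space M \<in> sets (Mt (Tk k))" by simp
qed

lemma H_events: "H b k \<in> events"
  using sets_Mt_sub[OF Tk_I] H_Mt by auto

lemma prob_H: "prob (H b k) = (1/2) ^ card (Tk k)"
proof -
  have "prob (H b k) = (\<Prod>j\<in>Tk k. prob (basic_family adj \<xi> j -` Cset b j \<inter> space M))"
    unfolding H_def using Tk_ne Tk_finite Tk_I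
    by (intro indep_varsD[OF indep]) (auto simp: Cset_def split: sum.splits)
  also have "\<dots> = (\<Prod>j\<in>Tk k. 1/2)"
  proof (rule prod.cong)
    fix j assume j: "j \<in> Tk k"
    show "prob (basic_family adj \<xi> j -` Cset b j \<inter> space M) = 1/2"
    proof (cases "j \<in> Gk k")
      case True
      then obtain a c where ab: "(a,c) \<in> Pairs" "j = Inl (k,a,c)" unfolding Gk_def by auto
      have "basic_family adj \<xi> j -` Cset b j \<inter> space M = {\<omega>\<in>space M. adj k a c \<omega>}"
        using ab by (auto simp: basic_family_def Cset_def)
      then show ?thesis using edges ab by (auto simp: Pairs_def)
    next
      case False
      then obtain i where i: "i \<in> {1..N}" "j = Inr (i,k)" using j unfolding Tk_def Nk_def by auto
      show ?thesis
      proof (cases b)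
        case True
        then have "basic_family adj \<xi> j -` Cset b j \<inter> space M = \<xi> i k -` {0<..} \<inter> space M"
          using i by (auto simp: basic_family_def Cset_def)
        then show ?thesis using noise_gt[OF i(1), of 0 k] eta_pos by simp
      next
        case False
        then have "basic_family adj \<xi> j -` Cset b j \<inter> space M = \<xi> i k -` {..<0} \<inter> space M"
          using i by (auto simp: basic_family_def Cset_def)
        then show ?thesis using noise_lt[OF i(1), of 0 k] eta_pos by simp
      qed
    qed
  qed simp
  also have "\<dots> = (1/2) ^ card (Tk k)" by simp
  finally show ?thesis .
qed

lemma H_mem:
  assumes "\<omega> \<in> H b k" "j \<in> Tk k"
  shows "basic_family adj \<xi> j \<omega> \<in> Cset b j"
proof -
  have "\<omega> \<in> basic_family adj \<xi> j -` Cset b j \<inter> space M" using assms unfolding H_def by blast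
  then show ?thesis by simp
qed

lemma H_complete:
  assumes om: "\<omega> \<in> H b k" and i: "i \<in> {1..N}" and j: "j \<in> {1..N}" and ij: "i \<noteq> j"
  shows "adj k i j \<omega>"
proof -
  have sp: "\<omega> \<in> space M" using om H_events sets.sets_into_space by blast
  consider "i < j" | "j < i" using ij by linarith
  then show ?thesis
  proof cases
    case 1
    then have "Inl (k,i,j) \<in> Tk k" using i j by (auto simp: Tk_def Gk_def Pairs_def)
    then show ?thesis using H_mem[OF om] by (force simp: basic_family_def Cset_def)
  next
    case 2
    then have "Inl (k,j,i) \<in> Tk k" using i j by (auto simp: Tk_def Gk_def Pairs_def)
    then have "adj k j i \<omega>" using H_mem[OF om] by (force simp: basic_family_def Cset_def)
    then show ?thesis using adj_sym sp by auto
  qed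
qed

lemma H_noise:
  assumes om: "\<omega> \<in> H b k" and i: "i \<in> {1..N}"
  shows "if b then \<xi> i k \<omega> > 0 else \<xi> i k \<omega> < 0"
proof -
  have "Inr (i,k) \<in> Tk k" using i by (auto simp: Tk_def Nk_def)
  then have "basic_family adj \<xi> (Inr (i,k)) \<omega> \<in> Cset b (Inr (i,k))" using H_mem[OF om] by blast
  then show ?thesis by (cases b) (auto simp: basic_family_def Cset_def)
qed

lemma v_complete:
  assumes om: "\<omega> \<in> H b k" and i: "i \<in> {1..N}"
  shows "v k i \<omega> = (\<Sum>j\<in>{1..N}. st k \<omega> j) / real N"
proof -
  have "nbhd N (\<lambda>a c. adj k a c \<omega>) i = {1..N}"
    using H_complete[OF om i] unfolding nbhd_def by blast
  then show ?thesis unfolding v_def local_avg_def by simp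
qed

lemma step_cons:
  assumes om: "\<omega> \<in> H b k" and b: "b = (0 \<le> (\<Sum>j\<in>{1..N}. st k \<omega> j))"
  shows "Cns (Suc k) \<omega>"
proof -
  have Npos: "real N > 0" using N2 by simp
  show ?thesis
  proof (cases b)
    case True
    have "st (Suc k) \<omega> i = 1" if i: "i \<in> {1..N}" for i
    proof -
      have "v k i \<omega> \<ge> 0" unfolding v_complete[OF om i] using True b Npos by simp
      moreover have "\<xi> i k \<omega> > 0" using H_noise[OF om i] True by simp
      ultimately show ?thesis unfolding st_Suc by simp
    qed
    then show ?thesis unfolding Cns_def by auto
  next
    case False
    have "st (Suc k) \<omega> i = -1" if i: "i \<in> {1..N}" for i
    proof -
      have "v k i \<omega> < 0" unfolding v_complete[OF om i] using False b Npos by (simp add: divide_neg_pos)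
      moreover have "\<xi> i k \<omega> < 0" using H_noise[OF om i] False by simp
      ultimately show ?thesis unfolding st_Suc by simp
    qed
    then show ?thesis unfolding Cns_def by auto
  qed
qed

lemma Cns_Mp: "Pk t \<subseteq> S \<Longrightarrow> S \<subseteq> I \<Longrightarrow> {\<omega>\<in>space M. Cns t \<omega>} \<in> sets (Mp S)"
proof -
  assume S: "Pk t \<subseteq> S" "S \<subseteq> I"
  have A: "{\<omega>\<in>space M. st t \<omega> i = c} \<in> sets (Mp S)" if i: "i \<in> {1..N}" for i c
  proof -
    have "(\<lambda>\<omega>. st t \<omega> i) -` {c} \<inter> space (Mp S) \<in> sets (Mp S)"
      using st_Mp[OF S(2,1) i] by (rule measurable_sets) simp
    moreover have "(\<lambda>\<omega>. st t \<omega> i) -` {c} \<inter> space (Mp S) = {\<omega>\<in>space M. st t \<omega> i = c}" by auto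
    ultimately show ?thesis by simp
  qed
  have B: "{\<omega>\<in>space M. \<forall>i\<in>{1..N}. st t \<omega> i = c} \<in> sets (Mp S)" for c
  proof -
    have "(\<Inter>i\<in>{1..N}. {\<omega>\<in>space M. st t \<omega> i = c}) \<in> sets (Mp S)"
      using N2 A by (intro sets.finite_INT) auto
    moreover have "(1::nat) \<in> {1..N}" using N2 by simp
    then have "(\<Inter>i\<in>{1..N}. {\<omega>\<in>space M. st t \<omega> i = c}) = {\<omega>\<in>space M. \<forall>i\<in>{1..N}. st t \<omega> i = c}"
      by blast
    ultimately show ?thesis by simp
  qed
  have "{\<omega>\<in>space M. Cns t \<omega>} = {\<omega>\<in>space M. \<forall>i\<in>{1..N}. st t \<omega> i = 1} \<union> {\<omega>\<in>space M. \<forall>i\<in>{1..N}. st t \<omega> i = -1}"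
    unfolding Cns_def by auto
  then show ?thesis using B[of 1] B[of "-1"] by auto
qed

lemma D_Mp: "D k \<in> sets (Mp (Pk k))"
proof -
  have "D k = space M - (\<Union>t\<in>{..k}. {\<omega>\<in>space M. Cns t \<omega>})" unfolding D_def by auto
  also have "\<dots> \<in> sets (Mp (Pk k))"
    using Cns_Mp[OF Pk_mono Pk_I] sets.top[of "Mp (Pk k)"]
    by (intro sets.Diff sets.finite_UN) auto
  finally show ?thesis .
qed

lemma Spos_Mp: "{\<omega>\<in>space M. 0 \<le> (\<Sum>j\<in>{1..N}. st k \<omega> j)} \<in> sets (Mp (Pk k))"
proof -
  have m: "(\<lambda>\<omega>. \<Sum>j\<in>{1..N}. st k \<omega> j) \<in> borel_measurable (Mp (Pk k))"
    using st_Mp[OF Pk_I order_refl] by (intro borel_measurable_sum) auto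
  have "(\<lambda>\<omega>. \<Sum>j\<in>{1..N}. st k \<omega> j) -` {0..} \<inter> space (Mp (Pk k)) \<in> sets (Mp (Pk k))"
    using m by (rule measurable_sets) simp
  moreover have "(\<lambda>\<omega>. \<Sum>j\<in>{1..N}. st k \<omega> j) -` {0..} \<inter> space (Mp (Pk k)) = {\<omega>\<in>space M. 0 \<le> (\<Sum>j\<in>{1..N}. st k \<omega> j)}"
    by auto
  ultimately show ?thesis by simp
qed

definition "q = (1/2::real) ^ (card Pairs + N)"

lemma card_Tk: "card (Tk k) = card Pairs + N"
proof -
  have "card (Nk k) = N" unfolding Nk_def by (subst card_image) (auto simp: inj_on_def)
  moreover have "finite (Nk k)" by (simp add: Nk_def)
  ultimately show ?thesis unfolding Tk_def using card_Un_disjoint[OF Gk_finite _ Gk_Nk] card_Gk by simp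
qed

lemma prob_H': "prob (H b k) = q" unfolding prob_H card_Tk q_def ..

lemma q_pos: "0 < q" and q_le: "q \<le> 1" unfolding q_def by (auto simp: power_le_one)

lemma D_step: "prob (D (Suc k)) \<le> (1 - q) * prob (D k)"
proof -
  define Sp where "Sp = {\<omega>\<in>space M. 0 \<le> (\<Sum>j\<in>{1..N}. st k \<omega> j)}"
  define A1 where "A1 = D k \<inter> Sp"
  define A2 where "A2 = D k - Sp"
  have A1p: "A1 \<in> sets (Mp (Pk k))" unfolding A1_def Sp_def using D_Mp Spos_Mp by auto
  have A2p: "A2 \<in> sets (Mp (Pk k))" unfolding A2_def Sp_def using D_Mp Spos_Mp by auto
  have ST: "Pk k \<subseteq> I" "Tk k \<subseteq> I" "Pk k \<inter> Tk k = {}" using Pk_I Tk_I Pk_Tk by auto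
  have ev: "A1 \<in> events" "A2 \<in> events" "H True k \<in> events" "H False k \<in> events"
    using A1p A2p sets_Mp_sub[OF Pk_I] H_events by auto
  have Dk: "D k \<in> events" using D_Mp sets_Mp_sub[OF Pk_I] by auto
  have sub: "D (Suc k) \<subseteq> (A1 - H True k) \<union> (A2 - H False k)"
  proof
    fix \<omega> assume om: "\<omega> \<in> D (Suc k)"
    then have sp: "\<omega> \<in> space M" and nc: "\<not> Cns (Suc k) \<omega>" and dk: "\<omega> \<in> D k"
      unfolding D_def by auto
    show "\<omega> \<in> (A1 - H True k) \<union> (A2 - H False k)"
    proof (cases "\<omega> \<in> Sp")
      case True
      then have "0 \<le> (\<Sum>j\<in>{1..N}. st k \<omega> j)" unfolding Sp_def by auto
      then have "\<omega> \<notin> H True k" using step_cons[of \<omega> True k] nc by auto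
      then show ?thesis using True dk unfolding A1_def by auto
    next
      case False
      then have "\<not> 0 \<le> (\<Sum>j\<in>{1..N}. st k \<omega> j)" unfolding Sp_def using sp by auto
      then have "\<omega> \<notin> H False k" using step_cons[of \<omega> False k] nc by auto
      then show ?thesis using False dk unfolding A2_def by auto
    qed
  qed
  have e1: "prob (A1 - H True k) = prob A1 - prob A1 * q"
    using finite_measure_Diff'[OF ev(1) ev(3)] indep_events_MpMt[OF ST A1p H_Mt] prob_H' by simp
  have e2: "prob (A2 - H False k) = prob A2 - prob A2 * q"
    using finite_measure_Diff'[OF ev(2) ev(4)] indep_events_MpMt[OF ST A2p H_Mt] prob_H' by simp
  have dis: "(A2 - H False k) - (A1 - H True k) = A2 - H False k" unfolding A1_def A2_def by auto
  have "prob (D (Suc k)) \<le> prob ((A1 - H True k) \<union> (A2 - H False k))"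
    using sub ev by (intro finite_measure_mono) auto
  also have "\<dots> = prob (A1 - H True k) + prob (A2 - H False k)"
    using finite_measure_Union'[of "A1 - H True k" "A2 - H False k"] ev dis by auto
  also have "\<dots> = (1 - q) * (prob A1 + prob A2)" unfolding e1 e2 by (simp add: algebra_simps)
  also have "prob A1 + prob A2 = prob (D k)"
  proof -
    have "D k = A1 \<union> A2" "A2 - A1 = A2" unfolding A1_def A2_def by auto
    then show ?thesis using finite_measure_Union'[OF ev(1,2)] by simp
  qed
  finally show ?thesis .
qed

lemma D_bound: "prob (D k) \<le> (1 - q) ^ k"
proof (induction k)
  case 0 then show ?case by simp
next
  case (Suc k)
  have "prob (D (Suc k)) \<le> (1 - q) * prob (D k)" by (rule D_step)
  also have "\<dots> \<le> (1 - q) * (1 - q) ^ k" using Suc q_le by (intro mult_left_mono) auto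
  finally show ?case by simp
qed

lemma Dinf_null: "(\<Inter>k. D k) \<in> null_sets M"
proof -
  have Dk: "D k \<in> events" for k using D_Mp sets_Mp_sub[OF Pk_I] by auto
  have ev: "(\<Inter>k. D k) \<in> events" using Dk by (intro sets.countable_INT) auto
  have lim: "(\<lambda>k. (1 - q) ^ k) \<longlonglongrightarrow> 0" using q_pos q_le by (intro LIMSEQ_power_zero) auto
  have "prob (\<Inter>k. D k) \<le> (1 - q) ^ k" for k
  proof -
    have "prob (\<Inter>k. D k) \<le> prob (D k)" using Dk by (intro finite_measure_mono) auto
    then show ?thesis using D_bound[of k] by linarith
  qed
  then have "prob (\<Inter>k. D k) \<le> 0" by (intro LIMSEQ_le_const[OF lim]) auto
  then have "prob (\<Inter>k. D k) = 0" using measure_nonneg[of M "\<Inter>k. D k"] by linarith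
  then have "emeasure M (\<Inter>k. D k) = 0" using ev by (simp add: emeasure_eq_measure)
  then show ?thesis using ev by (rule null_setsI)
qed

lemma AE_of_prob0:
  assumes "A \<in> events" "prob A = 0" "{\<omega>\<in>space M. \<not> P \<omega>} = A"
  shows "AE \<omega> in M. P \<omega>"
  using assms by (subst AE_iff_measurable[OF assms(1,3)]) (simp add: emeasure_eq_measure)

lemma noise_AE:
  assumes e: "\<eta> \<le> 1"
  shows "AE \<omega> in M. \<forall>i\<in>{1..N}. \<forall>k. -1 < \<xi> i k \<omega> \<and> \<xi> i k \<omega> < 1"
proof (subst AE_ball_countable, simp, intro ballI, subst AE_all_countable, intro allI)
  fix i k assume i: "i \<in> {1..N}"
  have s1: "\<xi> i k -` {..-1} \<inter> space M \<in> events" by (rule measurable_sets[OF xi_M[OF i]]) simp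
  have s2: "\<xi> i k -` {1..} \<inter> space M \<in> events" by (rule measurable_sets[OF xi_M[OF i]]) simp
  have a1: "AE \<omega> in M. -1 < \<xi> i k \<omega>"
    by (rule AE_of_prob0[OF s1 noise_le_m1[OF i e, of k]]) auto
  have a2: "AE \<omega> in M. \<xi> i k \<omega> < 1"
    by (rule AE_of_prob0[OF s2 noise_ge_1[OF i e, of k]]) auto
  show "AE \<omega> in M. -1 < \<xi> i k \<omega> \<and> \<xi> i k \<omega> < 1" using a1 a2 by eventually_elim auto
qed

lemma v_const:
  assumes c: "\<forall>j\<in>{1..N}. st k \<omega> j = c" and i: "i \<in> {1..N}"
  shows "v k i \<omega> = c"
proof -
  define nb where "nb = nbhd N (\<lambda>a b. adj k a b \<omega>) i"
  have nbs: "nb \<subseteq> {1..N}" "i \<in> nb" unfolding nb_def nbhd_def using i by auto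
  have fin: "finite nb" using nbs by (auto intro: finite_subset)
  have cp: "real (card nb) > 0" using fin nbs card_gt_0_iff by fastforce
  have "sum (st k \<omega>) nb = sum (\<lambda>_. c) nb" using c nbs by (intro sum.cong) auto
  then have "sum (st k \<omega>) nb = real (card nb) * c" by simp
  then show ?thesis unfolding v_def local_avg_def nb_def[symmetric] using cp by simp
qed

lemma absorb:
  assumes C: "Cns t \<omega>" and nz: "\<forall>i\<in>{1..N}. \<forall>k. -1 < \<xi> i k \<omega> \<and> \<xi> i k \<omega> < 1"
  shows "\<exists>c\<in>{1,-1::real}. \<exists>K. \<forall>k\<ge>K. \<forall>i\<in>{1..N}. st k \<omega> i = c"
proof -
  obtain c where c: "c \<in> {1,-1::real}" "\<forall>i\<in>{1..N}. st t \<omega> i = c" using C unfolding Cns_def by auto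
  have "\<forall>i\<in>{1..N}. st k \<omega> i = c" if "t \<le> k" for k
    using that
  proof (induction rule: dec_induct)
    case base then show ?case using c by simp
  next
    case (step k)
    show ?case
    proof
      fix i assume i: "i \<in> {1..N}"
      have v: "v k i \<omega> = c" by (rule v_const[OF step.IH i])
      have "-1 < \<xi> i k \<omega> \<and> \<xi> i k \<omega> < 1" using nz i by blast
      then show "st (Suc k) \<omega> i = c" unfolding st_Suc v using c(1) by (auto simp: sgn_if)
    qed
  qed
  then show ?thesis using c(1) by blast
qed

lemma part1:
  assumes e: "\<eta> \<le> 1"
  shows "AE \<omega> in M. \<exists>c\<in>{1, -1::real}. \<exists>K. \<forall>k\<ge>K. \<forall>i\<in>{1..N}. state N adj \<xi> x0 k \<omega> i = c"
  using AE_not_in[OF Dinf_null] noise_AE[OF e] AE_space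
proof eventually_elim
  case (elim \<omega>)
  then obtain k where "\<omega> \<notin> D k" by auto
  then obtain t where "Cns t \<omega>" using elim(3) unfolding D_def by auto
  then show ?case using absorb elim(2) by blast
qed

lemma part2:
  assumes e: "1 < \<eta>"
  shows "(\<forall>k. integral\<^sup>L M (state_sum N adj \<xi> x0 k) = \<eta> powi (- int k) * integral\<^sup>L M (state_sum N adj \<xi> x0 0))
     \<and> (\<lambda>k. integral\<^sup>L M (state_sum N adj \<xi> x0 k)) \<longlonglongrightarrow> 0"
proof
  have pw: "\<eta> powi (- int k) = (inverse \<eta>) ^ k" for k
  proof -
    have "\<eta> powi (- int k) = inverse (\<eta> powi int k)" by (rule power_int_minus)
    also have "\<eta> powi int k = \<eta> ^ k" by (rule power_int_of_nat)
    also have "inverse (\<eta> ^ k) = inverse \<eta> ^ k" by (rule power_inverse[symmetric])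
    finally show ?thesis .
  qed
  have eq: "integral\<^sup>L M (state_sum N adj \<xi> x0 k) = \<eta> powi (- int k) * integral\<^sup>L M (state_sum N adj \<xi> x0 0)" for k
  proof (induction k)
    case 0 then show ?case by simp
  next
    case (Suc k)
    have "inverse \<eta> ^ Suc k = inverse \<eta> ^ k / \<eta>" by (simp add: divide_inverse mult.commute)
    then show ?case unfolding E_S_step[OF e] Suc pw by simp
  qed
  then show "\<forall>k. integral\<^sup>L M (state_sum N adj \<xi> x0 k) = \<eta> powi (- int k) * integral\<^sup>L M (state_sum N adj \<xi> x0 0)" ..
  have "(\<lambda>k. (inverse \<eta>) ^ k * integral\<^sup>L M (state_sum N adj \<xi> x0 0)) \<longlonglongrightarrow> 0"
  proof (rule tendsto_mult_left_zero)
    have "inverse \<eta> < inverse 1" using e by (intro less_imp_inverse_less) auto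
    then have "norm (inverse \<eta>) < 1" using e by simp
    then show "(\<lambda>k. inverse \<eta> ^ k) \<longlonglongrightarrow> 0" by (rule LIMSEQ_power_zero)
  qed
  moreover have F: "(\<lambda>k. integral\<^sup>L M (state_sum N adj \<xi> x0 k)) = (\<lambda>k. inverse \<eta> ^ k * integral\<^sup>L M (state_sum N adj \<xi> x0 0))"
  proof (rule ext)
    fix k show "integral\<^sup>L M (state_sum N adj \<xi> x0 k) = inverse \<eta> ^ k * integral\<^sup>L M (state_sum N adj \<xi> x0 0)"
      using eq[of k] unfolding pw .
  qed
  ultimately show "(\<lambda>k. integral\<^sup>L M (state_sum N adj \<xi> x0 k)) \<longlonglongrightarrow> 0"
    by (simp only: F)
qed

end

theorem proposition2:
  fixes M :: "'a measure" and N :: nat and \<eta> :: real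
    and adj :: "nat \<Rightarrow> nat \<Rightarrow> nat \<Rightarrow> 'a \<Rightarrow> bool"
    and \<xi> :: "nat \<Rightarrow> nat \<Rightarrow> 'a \<Rightarrow> real"
    and x0 :: "'a \<Rightarrow> nat \<Rightarrow> real"
  assumes "prob_space M"
    and "N \<ge> 2" and "\<eta> > 0"
    and adj_sym: "\<forall>k i j. \<forall>\<omega>\<in>space M. adj k i j \<omega> = adj k j i \<omega>"
    and edges: "\<forall>k i j. 1 \<le> i \<longrightarrow> i < j \<longrightarrow> j \<le> N \<longrightarrow>
                  prob_space.prob M {\<omega> \<in> space M. adj k i j \<omega>} = 1 / 2"
    and noise: "\<forall>i k. 1 \<le> i \<longrightarrow> i \<le> N \<longrightarrow>
                  distr M lborel (\<xi> i k) = uniform_measure lborel {-\<eta>..\<eta>}"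
    and indep: "prob_space.indep_vars M (\<lambda>_. borel) (basic_family adj \<xi>) (basic_index N)"
    and x0_vals: "\<forall>\<omega>\<in>space M. \<forall>i\<in>{1..N}. x0 \<omega> i \<in> {1, -1}"
    and x0_indep: "indep_rv M
                  (Pi\<^sub>M {1..N} (\<lambda>_. borel)) (\<lambda>\<omega>. restrict (x0 \<omega>) {1..N})
                  (Pi\<^sub>M (basic_index N) (\<lambda>_. borel))
                  (\<lambda>\<omega>. \<lambda>j\<in>basic_index N. basic_family adj \<xi> j \<omega>)"
  shows "(\<eta> \<le> 1 \<longrightarrow>
            (AE \<omega> in M. \<exists>c\<in>{1, -1::real}. \<exists>K. \<forall>k\<ge>K. \<forall>i\<in>{1..N}.
                state N adj \<xi> x0 k \<omega> i = c))
       \<and> (\<eta> > 1 \<longrightarrow>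
            (\<forall>k. integral\<^sup>L M (state_sum N adj \<xi> x0 k)
                   = \<eta> powi (- int k) * integral\<^sup>L M (state_sum N adj \<xi> x0 0))
          \<and> (\<lambda>k. integral\<^sup>L M (state_sum N adj \<xi> x0 k)) \<longlonglongrightarrow> 0)"
proof -
  interpret S: sysA M N \<eta> adj \<xi> x0
    using assms unfolding sysA_def sysA_axioms_def by auto
  show ?thesis using S.part1 S.part2 by blast
qed

end
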